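(* The full generating functions $A(z),B(z),C(z)$ satisfy \[ A(z)=\frac{d^2x^8z^2}{1-x^4z}+\frac{dx^4z}{(1-x^4z)^2}A(z)+\frac{dx^4z}{1-x^4z}B(z)+dx^4zC(z). \]
   Context: A cell is a closed unit square $[i,i+1]\times[j,j+1]$, $i,j\in\mathbb{Z}$, identified with $(i,j)$. A polyomino is a finite nonempty set of cells connected under edge-adjacency, up to translation. The $n$-th diagonal is the set of cells $(i,j)$ with $i+j=n$. A polyomino $P$ is diagonally convex (a DCP) if for every $n$ its cells on the $n$-th diagonal are $(i,n-i)$ with $i$ ranging over an interval. $\mathrm{di}(P)$ is the number of $n$ for which $P$ has a cell on the $n$-th diagonal; $\mathrm{pe}(P)$ is the number of unit edges separating a cell of $P$ from a cell not in $P$; if $m$ is the largest $n$ for which $P$ meets the $n$-th diagonal, the last diagonal of $P$ is its set of cells on the $m$-th diagonal and $\mathrm{la}(P)$ is its number of cells. Noses: let $P$ be a DCP with at least two diagonals, and let $a=(i_a,j_a)$ and $b=(i_b,j_b)$ be the cells of $P$ on the $(m-1)$-th diagonal with smallest and largest first coordinate respectively (possibly $a=b$). If $(i_a,j_a+1)\in P$ it is a nose of $P$; if $(i_b+1,j_b)\in P$ it is a nose of $P$. Thus $P$ has two, one or zero noses. Define $A(z),B(z),C(z)$ as $\sum_P d^{\mathrm{di}(P)}x^{\mathrm{pe}(P)}z^{\mathrm{la}(P)}$, summed over DCPs with at least two diagonals having respectively exactly two, exactly one, exactly zero noses; these are formal power series in $d,x,z$. *)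

theory Defs
  imports Main "HOL-Computational_Algebra.Formal_Power_Series"
begin

type_synonym cell = "int \<times> int"

definition adj :: "cell \<Rightarrow> cell \<Rightarrow> bool" where
  "adj c c' \<longleftrightarrow> \<bar>fst c - fst c'\<bar> + \<bar>snd c - snd c'\<bar> = 1"

definition edge_connected :: "cell set \<Rightarrow> bool" where
  "edge_connected P \<longleftrightarrow>
     (\<forall>a\<in>P. \<forall>b\<in>P. (a, b) \<in> {(c, c'). c \<in> P \<and> c' \<in> P \<and> adj c c'}\<^sup>*)"

definition polyomino :: "cell set \<Rightarrow> bool" where
  "polyomino P \<longleftrightarrow> finite P \<and> P \<noteq> {} \<and> edge_connected P"

text \<open>Canonical representative of a translation class: the smallest first and
  second coordinates occurring are both 0.\<close>
definition normalized :: "cell set \<Rightarrow> bool" where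
  "normalized P \<longleftrightarrow> (\<forall>(i, j)\<in>P. 0 \<le> i \<and> 0 \<le> j) \<and>
     (\<exists>j. (0, j) \<in> P) \<and> (\<exists>i. (i, 0) \<in> P)"

definition DCP :: "cell set \<Rightarrow> bool" where
  "DCP P \<longleftrightarrow> polyomino P \<and>
     (\<forall>n a b c. (a, n - a) \<in> P \<longrightarrow> (c, n - c) \<in> P \<longrightarrow> a \<le> b \<longrightarrow> b \<le> c
        \<longrightarrow> (b, n - b) \<in> P)"

definition diags :: "cell set \<Rightarrow> int set" where
  "diags P = {n. \<exists>(i, j)\<in>P. i + j = n}"

definition di :: "cell set \<Rightarrow> nat" where
  "di P = card (diags P)"

definition pe :: "cell set \<Rightarrow> nat" where
  "pe P = card {(c, c'). c \<in> P \<and> c' \<notin> P \<and> adj c c'}"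

definition lastdiag_index :: "cell set \<Rightarrow> int" where
  "lastdiag_index P = Max (diags P)"

definition la :: "cell set \<Rightarrow> nat" where
  "la P = card {(i, j) \<in> P. i + j = lastdiag_index P}"

definition nose_ia :: "cell set \<Rightarrow> int" where
  "nose_ia P = Min {i. (i, lastdiag_index P - 1 - i) \<in> P}"

definition nose_ib :: "cell set \<Rightarrow> int" where
  "nose_ib P = Max {i. (i, lastdiag_index P - 1 - i) \<in> P}"

definition nose_left :: "cell set \<Rightarrow> bool" where
  "nose_left P \<longleftrightarrow> (nose_ia P, lastdiag_index P - 1 - nose_ia P + 1) \<in> P"

definition nose_right :: "cell set \<Rightarrow> bool" where
  "nose_right P \<longleftrightarrow> (nose_ib P + 1, lastdiag_index P - 1 - nose_ib P) \<in> P"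

definition noses :: "cell set \<Rightarrow> nat" where
  "noses P = (if nose_left P then 1 else 0) + (if nose_right P then 1 else 0)"

definition dcp_count :: "nat \<Rightarrow> nat \<Rightarrow> nat \<Rightarrow> nat \<Rightarrow> nat" where
  "dcp_count k n p l = card {P. DCP P \<and> normalized P \<and> di P \<ge> 2 \<and> noses P = k \<and>
       di P = n \<and> pe P = p \<and> la P = l}"

text \<open>Trivariate formal power series in d, x, z: outer variable z, middle x, inner d.\<close>
definition GF :: "nat \<Rightarrow> rat fps fps fps" where
  "GF k = Abs_fps (\<lambda>l. Abs_fps (\<lambda>p. Abs_fps (\<lambda>n. of_nat (dcp_count k n p l))))"

definition Zv :: "rat fps fps fps" where "Zv = fps_X"
definition Xv :: "rat fps fps fps" where "Xv = fps_const fps_X"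
definition Dv :: "rat fps fps fps" where "Dv = fps_const (fps_const fps_X)"

definition Agf :: "rat fps fps fps" where "Agf = GF 2"
definition Bgf :: "rat fps fps fps" where "Bgf = GF 1"
definition Cgf :: "rat fps fps fps" where "Cgf = GF 0"

end

theory Submission
  imports Defs
begin

lemma adj_iff: "adj (i,j) c \<longleftrightarrow> c = (i+1,j) \<or> c = (i-1,j) \<or> c = (i,j+1) \<or> c = (i,j-1)"
  by (cases c) (auto simp: adj_def abs_if split: if_splits)

lemma adj_sym: "adj c c' \<longleftrightarrow> adj c' c"
  by (auto simp: adj_def abs_minus_commute)

lemma adj_dg: "adj c c' \<Longrightarrow> fst c' + snd c' = fst c + snd c + 1 \<or> fst c' + snd c' = fst c + snd c - 1"
  by (cases c) (auto simp: adj_iff)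


definition arel :: "cell set \<Rightarrow> (cell \<times> cell) set" where
  "arel P = {(c, c'). c \<in> P \<and> c' \<in> P \<and> adj c c'}"

lemma ec_def2: "edge_connected P \<longleftrightarrow> (\<forall>a\<in>P. \<forall>b\<in>P. (a, b) \<in> (arel P)\<^sup>*)"
  by (simp add: edge_connected_def arel_def)

lemma arel_sym: "(a,b) \<in> (arel P)\<^sup>* \<Longrightarrow> (b,a) \<in> (arel P)\<^sup>*"
proof -
  have "sym (arel P)" by (auto simp: sym_def arel_def adj_sym)
  moreover assume "(a,b) \<in> (arel P)\<^sup>*"
  ultimately show ?thesis by (metis rtrancl_converseI sym_conv_converse_eq)
qed

lemma arel_mono: "P \<subseteq> P' \<Longrightarrow> (a,b) \<in> (arel P)\<^sup>* \<Longrightarrow> (a,b) \<in> (arel P')\<^sup>*"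
proof -
  assume "P \<subseteq> P'" "(a,b) \<in> (arel P)\<^sup>*"
  moreover have "arel P \<subseteq> arel P'" using \<open>P \<subseteq> P'\<close> by (auto simp: arel_def)
  ultimately show ?thesis using rtrancl_mono by blast
qed

lemma arel_in: "(a,b) \<in> (arel P)\<^sup>* \<Longrightarrow> a \<noteq> b \<Longrightarrow> a \<in> P \<and> b \<in> P"
  by (induction rule: rtrancl_induct) (auto simp: arel_def)

lemma arel_step: "a \<in> P \<Longrightarrow> b \<in> P \<Longrightarrow> adj a b \<Longrightarrow> (a,b) \<in> (arel P)\<^sup>*"
  by (auto simp: arel_def)

lemma conn_nbr:
  assumes "edge_connected P" "a \<in> P" "b \<in> P" "a \<noteq> b"
  shows "\<exists>c\<in>P. adj a c"
proof -
  have "(a,b) \<in> (arel P)\<^sup>*" using assms by (simp add: ec_def2)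
  then show ?thesis using assms(4)
    by (cases rule: converse_rtranclE) (auto simp: arel_def)
qed

lemma conn_split_aux:
  assumes "(a,b) \<in> (arel P)\<^sup>*" "a \<in> X" "b \<notin> X"
  shows "\<exists>x\<in>X. \<exists>y\<in>P-X. x \<in> P \<and> adj x y"
  using assms
proof (induction rule: rtrancl_induct)
  case base then show ?case by simp
next
  case (step y z)
  show ?case
  proof (cases "y \<in> X")
    case True then show ?thesis using step by (auto simp: arel_def)
  next
    case False then show ?thesis using step by auto
  qed
qed

lemma conn_split:
  assumes "edge_connected P" "a \<in> P" "a \<in> X" "b \<in> P" "b \<notin> X"
  shows "\<exists>x\<in>P \<inter> X. \<exists>y\<in>P-X. adj x y"
  using conn_split_aux[of a b P X] assms by (auto simp: ec_def2)

lemma retract: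
  assumes "edge_connected P" "Q \<subseteq> P" "\<And>q. q \<in> Q \<Longrightarrow> r q = q"
    "\<And>c c'. c \<in> P \<Longrightarrow> c' \<in> P \<Longrightarrow> adj c c' \<Longrightarrow> (r c, r c') \<in> (arel Q)\<^sup>*"
  shows "edge_connected Q"
proof -
  have *: "(r a, r b) \<in> (arel Q)\<^sup>*" if "(a,b) \<in> (arel P)\<^sup>*" for a b
    using that
  proof (induction rule: rtrancl_induct)
    case base then show ?case by simp
  next
    case (step y z)
    then have "(r y, r z) \<in> (arel Q)\<^sup>*" using assms(4) by (auto simp: arel_def)
    then show ?case using step.IH by (meson rtrancl_trans)
  qed
  show ?thesis unfolding ec_def2
  proof (intro ballI)
    fix a b assume "a \<in> Q" "b \<in> Q"
    then have "(a,b) \<in> (arel P)\<^sup>*" using assms(1,2) by (auto simp: ec_def2)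
    then have "(r a, r b) \<in> (arel Q)\<^sup>*" by (rule *)
    then show "(a,b) \<in> (arel Q)\<^sup>*" using assms(3) \<open>a \<in> Q\<close> \<open>b \<in> Q\<close> by simp
  qed
qed


lemma nbrs_eq: "{c'. adj c c'} = {(fst c+1,snd c),(fst c-1,snd c),(fst c,snd c+1),(fst c,snd c-1)}"
  using adj_iff[of "fst c" "snd c"] by auto

lemma card_nbrs: "card {c'. adj c c'} = 4"
  unfolding nbrs_eq by (auto simp: card_insert_if)

lemma finite_nbrs: "finite {c'. adj c c'}"
  unfolding nbrs_eq by auto

lemma finite_arel: "finite P \<Longrightarrow> finite (arel P)"
  by (rule finite_subset[of _ "P \<times> P"]) (auto simp: arel_def)

lemma pe_formula:
  assumes "finite P"
  shows "pe P + card (arel P) = 4 * card P"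
proof -
  let ?E = "{(c, c'). c \<in> P \<and> c' \<notin> P \<and> adj c c'}"
  have u: "?E \<union> arel P = Sigma P (\<lambda>c. {c'. adj c c'})" by (auto simp: arel_def)
  have fs: "finite (Sigma P (\<lambda>c. {c'. adj c c'}))" using assms finite_nbrs by auto
  have "card (Sigma P (\<lambda>c. {c'. adj c c'})) = 4 * card P"
    using assms by (simp add: card_SigmaI finite_nbrs card_nbrs)
  moreover have "card (?E \<union> arel P) = card ?E + card (arel P)"
    by (rule card_Un_disjoint) (use fs u in \<open>auto simp: arel_def intro: finite_subset\<close>)
  ultimately show ?thesis unfolding pe_def using u by simp
qed

definition cross :: "cell set \<Rightarrow> cell set \<Rightarrow> (cell \<times> cell) set" where
  "cross A B = {(a, b). a \<in> A \<and> b \<in> B \<and> adj a b}"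

lemma card_cross_swap: "card (cross B A) = card (cross A B)"
proof -
  have "cross B A = (\<lambda>(x,y). (y,x)) ` cross A B" by (auto simp: cross_def adj_sym image_iff)
  moreover have "inj_on (\<lambda>(x,y). (y,x)) (cross A B)" by (auto simp: inj_on_def)
  ultimately show ?thesis by (simp add: card_image)
qed

lemma card_arel_Un:
  assumes "finite A" "finite B" "A \<inter> B = {}"
  shows "card (arel (A \<union> B)) = card (arel A) + card (arel B) + 2 * card (cross A B)"
proof -
  have e: "arel (A \<union> B) = (arel A \<union> arel B) \<union> (cross A B \<union> cross B A)"
    by (auto simp: arel_def cross_def)
  have f1: "finite (cross A B)" "finite (cross B A)"
    using assms by (auto intro: finite_subset[of _ "A \<times> B"] finite_subset[of _ "B \<times> A"] simp: cross_def)
  have c1: "card (arel A \<union> arel B) = card (arel A) + card (arel B)"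
    by (rule card_Un_disjoint) (use assms finite_arel[of A] finite_arel[of B] in \<open>auto simp: arel_def\<close>)
  have c2: "card (cross A B \<union> cross B A) = card (cross A B) + card (cross B A)"
    by (rule card_Un_disjoint) (use assms f1 in \<open>auto simp: cross_def\<close>)
  have c3: "card ((arel A \<union> arel B) \<union> (cross A B \<union> cross B A)) =
     card (arel A \<union> arel B) + card (cross A B \<union> cross B A)"
    by (rule card_Un_disjoint) (use assms f1 finite_arel[of A] finite_arel[of B] in \<open>auto simp: cross_def arel_def\<close>)
  show ?thesis using e c1 c2 c3 card_cross_swap[of B A] by simp
qed


definition Dg :: "cell set \<Rightarrow> int \<Rightarrow> int set" where
  "Dg P k = {i. (i, k - i) \<in> P}"

definition conv :: "cell set \<Rightarrow> bool" where
  "conv P \<longleftrightarrow> (\<forall>n a b c. (a, n - a) \<in> P \<longrightarrow> (c, n - c) \<in> P \<longrightarrow> a \<le> b \<longrightarrow> b \<le> c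
        \<longrightarrow> (b, n - b) \<in> P)"

lemma DCP_iff: "DCP P \<longleftrightarrow> finite P \<and> P \<noteq> {} \<and> edge_connected P \<and> conv P"
  by (simp add: DCP_def polyomino_def conv_def)

lemma conv_Dg: "conv P \<Longrightarrow> a \<in> Dg P k \<Longrightarrow> c \<in> Dg P k \<Longrightarrow> a \<le> b \<Longrightarrow> b \<le> c \<Longrightarrow> b \<in> Dg P k"
  unfolding conv_def Dg_def by blast

lemma finite_Dg: "finite P \<Longrightarrow> finite (Dg P k)"
proof -
  assume "finite P"
  have "Dg P k = fst ` (P \<inter> {c. fst c + snd c = k})" by (force simp: Dg_def image_iff)
  then show ?thesis using \<open>finite P\<close> by simp
qed

lemma Dg_interval:
  assumes "conv P" "finite P" "Dg P k \<noteq> {}"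
  shows "Dg P k = {Min (Dg P k)..Max (Dg P k)}"
proof -
  have f: "finite (Dg P k)" by (rule finite_Dg[OF assms(2)])
  have mi: "Min (Dg P k) \<in> Dg P k" by (rule Min_in[OF f assms(3)])
  have ma: "Max (Dg P k) \<in> Dg P k" by (rule Max_in[OF f assms(3)])
  show ?thesis
  proof (rule set_eqI)
    fix b
    show "b \<in> Dg P k \<longleftrightarrow> b \<in> {Min (Dg P k)..Max (Dg P k)}"
    proof
      assume "b \<in> Dg P k"
      then show "b \<in> {Min (Dg P k)..Max (Dg P k)}" using Min_le[OF f] Max_ge[OF f] by simp
    next
      assume "b \<in> {Min (Dg P k)..Max (Dg P k)}"
      then show "b \<in> Dg P k" using conv_Dg[OF assms(1) mi ma, of b] by simp
    qed
  qed
qed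

lemma diags_finite: "finite P \<Longrightarrow> finite (diags P)"
proof -
  assume "finite P"
  have "diags P = (\<lambda>c. fst c + snd c) ` P" by (force simp: diags_def image_iff)
  then show ?thesis using \<open>finite P\<close> by simp
qed

lemma dg_in_diags: "c \<in> P \<Longrightarrow> fst c + snd c \<in> diags P"
  by (cases c) (auto simp: diags_def)

lemma diags_iff: "k \<in> diags P \<longleftrightarrow> Dg P k \<noteq> {}"
proof
  assume "k \<in> diags P"
  then obtain i j where "(i,j) \<in> P" "i + j = k" by (auto simp: diags_def)
  then have "i \<in> Dg P k" by (auto simp: Dg_def algebra_simps)
  then show "Dg P k \<noteq> {}" by auto
next
  assume "Dg P k \<noteq> {}"
  then obtain i where "(i, k - i) \<in> P" by (auto simp: Dg_def)
  then show "k \<in> diags P" using dg_in_diags by fastforce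
qed

lemma diags_ne: "P \<noteq> {} \<Longrightarrow> diags P \<noteq> {}"
  using dg_in_diags by blast

lemma dg_le_last: "finite P \<Longrightarrow> c \<in> P \<Longrightarrow> fst c + snd c \<le> lastdiag_index P"
  unfolding lastdiag_index_def by (rule Max_ge) (auto simp: diags_finite dg_in_diags)

lemma last_in_diags: "finite P \<Longrightarrow> P \<noteq> {} \<Longrightarrow> lastdiag_index P \<in> diags P"
  unfolding lastdiag_index_def by (rule Max_in) (auto simp: diags_finite diags_ne)

lemma Dg_last_ne: "finite P \<Longrightarrow> P \<noteq> {} \<Longrightarrow> Dg P (lastdiag_index P) \<noteq> {}"
  using last_in_diags diags_iff by blast

lemma la_Dg: "la P = card (Dg P (lastdiag_index P))"
proof -
  let ?m = "lastdiag_index P"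
  have "{(i, j) \<in> P. i + j = ?m} = (\<lambda>i. (i, ?m - i)) ` Dg P ?m"
  proof (rule set_eqI)
    fix x show "x \<in> {(i, j) \<in> P. i + j = ?m} \<longleftrightarrow> x \<in> (\<lambda>i. (i, ?m - i)) ` Dg P ?m"
    proof (cases x)
      case (Pair a b)
      have "a + b = ?m \<longleftrightarrow> b = ?m - a" by auto
      then show ?thesis using Pair by (auto simp: Dg_def image_iff)
    qed
  qed
  moreover have "inj_on (\<lambda>i. (i, ?m - i)) (Dg P ?m)" by (auto simp: inj_on_def)
  ultimately show ?thesis unfolding la_def by (simp add: card_image)
qed

lemma lastdiag_eqI: "finite P \<Longrightarrow> m \<in> diags P \<Longrightarrow> (\<And>c. c \<in> P \<Longrightarrow> fst c + snd c \<le> m) \<Longrightarrow> lastdiag_index P = m"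
  unfolding lastdiag_index_def
  by (rule Max_eqI) (auto simp: diags_finite diags_def)

lemma nose_ia_Dg: "nose_ia P = Min (Dg P (lastdiag_index P - 1))"
  by (simp add: nose_ia_def Dg_def algebra_simps)
lemma nose_ib_Dg: "nose_ib P = Max (Dg P (lastdiag_index P - 1))"
  by (simp add: nose_ib_def Dg_def algebra_simps)

lemma nose_left_Dg: "nose_left P \<longleftrightarrow> nose_ia P \<in> Dg P (lastdiag_index P)"
  by (simp add: nose_left_def Dg_def algebra_simps)
lemma nose_right_Dg: "nose_right P \<longleftrightarrow> nose_ib P + 1 \<in> Dg P (lastdiag_index P)"
  by (simp add: nose_right_def Dg_def algebra_simps)

lemma card_Icc_int: "card {a..b::int} = nat (b - a + 1)" by simp


definition cd :: "int \<Rightarrow> int \<Rightarrow> cell" where "cd m i = (i, m - i)"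

lemma cd_eq_iff[simp]: "cd m i = cd k j \<longleftrightarrow> m = k \<and> i = j"
  by (auto simp: cd_def)

lemma cell_cd: "c = cd (fst c + snd c) (fst c)"
  by (cases c) (simp add: cd_def)

lemma mem_cd_Dg: "cd k i \<in> P \<longleftrightarrow> i \<in> Dg P k"
  by (simp add: cd_def Dg_def)

lemma cd_img: "cd k i \<in> cd m ` S \<longleftrightarrow> k = m \<and> i \<in> S"
  by auto

lemma dg_cd[simp]: "fst (cd m i) + snd (cd m i) = m" "fst (cd m i) = i"
  by (auto simp: cd_def)

lemma adj_cd: "adj (cd m i) (cd k j) \<longleftrightarrow> (k = m + 1 \<and> (j = i \<or> j = i + 1)) \<or> (k = m - 1 \<and> (j = i \<or> j = i - 1))"
  unfolding cd_def adj_iff by auto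

lemma conv_iff_Dg: "conv P \<longleftrightarrow> (\<forall>k x y z. x \<in> Dg P k \<longrightarrow> z \<in> Dg P k \<longrightarrow> x \<le> y \<longrightarrow> y \<le> z \<longrightarrow> y \<in> Dg P k)"
  by (simp add: conv_def Dg_def)

lemma cell_all: "(\<forall>c\<in>P. R c) \<longleftrightarrow> (\<forall>k i. i \<in> Dg P k \<longrightarrow> R (cd k i))"
proof
  assume "\<forall>c\<in>P. R c" then show "\<forall>k i. i \<in> Dg P k \<longrightarrow> R (cd k i)" by (simp add: mem_cd_Dg[symmetric])
next
  assume h: "\<forall>k i. i \<in> Dg P k \<longrightarrow> R (cd k i)"
  show "\<forall>c\<in>P. R c"
  proof
    fix c assume "c \<in> P"
    then have "cd (fst c + snd c) (fst c) \<in> P" using cell_cd[of c] by simp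
    then have "R (cd (fst c + snd c) (fst c))" using h by (simp add: mem_cd_Dg)
    then show "R c" using cell_cd[of c] by simp
  qed
qed

lemma adj_cases_cd: "adj (cd m i) c \<Longrightarrow> c = cd (m+1) i \<or> c = cd (m+1) (i+1) \<or> c = cd (m - 1) i \<or> c = cd (m - 1) (i - 1)"
proof -
  assume a: "adj (cd m i) c"
  obtain k j where c: "c = cd k j" using cell_cd[of c] by blast
  have "(k = m + 1 \<and> (j = i \<or> j = i + 1)) \<or> (k = m - 1 \<and> (j = i \<or> j = i - 1))"
    using a unfolding c by (simp only: adj_cd)
  then show ?thesis unfolding c by auto
qed


lemma snd_cd[simp]: "snd (cd m i) = m - i" by (simp add: cd_def)
lemma Min_Icc: "x \<le> y \<Longrightarrow> Min {x..y::int} = x" by (rule Min_eqI) auto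
lemma Max_Icc: "x \<le> y \<Longrightarrow> Max {x..y::int} = y" by (rule Max_eqI) auto

definition c1 :: "cell set \<Rightarrow> int" where "c1 Q = Min (Dg Q (lastdiag_index Q))"
definition c2 :: "cell set \<Rightarrow> int" where "c2 Q = Max (Dg Q (lastdiag_index Q))"

definition constr :: "cell set \<Rightarrow> nat \<Rightarrow> nat \<Rightarrow> cell set" where
  "constr Q el er = Q \<union> cd (lastdiag_index Q) ` {c1 Q - int el .. c2 Q + int er}
     \<union> cd (lastdiag_index Q + 1) ` {c1 Q - int el .. c2 Q + int er + 1}"

locale cst =
  fixes Q :: "cell set" and el er :: nat
  assumes fin: "finite Q" and ne: "Q \<noteq> {}" and cv: "conv Q"
   and hc: "\<And>q. q \<in> Q \<Longrightarrow> \<exists>i\<in>Dg Q (lastdiag_index Q). (q, cd (lastdiag_index Q) i) \<in> (arel Q)\<^sup>*"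
   and hn: "\<And>q i. q \<in> Q \<Longrightarrow> i \<in> {c1 Q - int el .. c2 Q + int er} \<Longrightarrow> i \<notin> Dg Q (lastdiag_index Q)
              \<Longrightarrow> \<not> adj q (cd (lastdiag_index Q) i)"
begin

abbreviation "m \<equiv> lastdiag_index Q"
abbreviation "a \<equiv> c1 Q - int el"
abbreviation "b \<equiv> c2 Q + int er"
abbreviation "P \<equiv> constr Q el er"

lemma core: "Dg Q m = {c1 Q..c2 Q}" "c1 Q \<le> c2 Q"
proof -
  have "Dg Q m \<noteq> {}" using Dg_last_ne fin ne by blast
  then show "Dg Q m = {c1 Q..c2 Q}" unfolding c1_def c2_def using Dg_interval[OF cv fin] by blast
  then show "c1 Q \<le> c2 Q" using \<open>Dg Q m \<noteq> {}\<close> by auto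
qed

lemma dgQ: "q \<in> Q \<Longrightarrow> fst q + snd q \<le> m" using dg_le_last fin by blast

lemma DgQ_gt: "k > m \<Longrightarrow> Dg Q k = {}"
proof -
  assume k: "k > m"
  { fix i assume "i \<in> Dg Q k"
    then have "cd k i \<in> Q" by (simp add: mem_cd_Dg)
    then have "k \<le> m" using dgQ[of "cd k i"] by simp
    then have False using k by simp }
  then show ?thesis by blast
qed

lemma memP: "cd k i \<in> P \<longleftrightarrow> cd k i \<in> Q \<or> (k = m \<and> i \<in> {a..b}) \<or> (k = m + 1 \<and> i \<in> {a..b+1})"
  unfolding constr_def Un_iff cd_img by simp

lemma DgP: "i \<in> Dg P k \<longleftrightarrow> i \<in> Dg Q k \<or> (k = m \<and> a \<le> i \<and> i \<le> b) \<or> (k = m + 1 \<and> a \<le> i \<and> i \<le> b+1)"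
  using memP[of k i] by (simp add: mem_cd_Dg)

lemma DgP_m: "Dg P m = {a..b}"
  using core DgP[of _ m] by auto

lemma DgP_m1: "Dg P (m+1) = {a..b+1}"
  using DgQ_gt[of "m+1"] DgP[of _ "m+1"] by auto

lemma DgP_other: "k \<noteq> m \<Longrightarrow> k \<noteq> m + 1 \<Longrightarrow> Dg P k = Dg Q k"
  using DgP[of _ k] by auto

lemma finP: "finite P" using fin by (simp add: constr_def)

lemma QsubP: "Q \<subseteq> P" by (auto simp: constr_def)

lemma PneP: "P \<noteq> {}" using QsubP ne by blast

lemma convP: "conv P"
  unfolding conv_iff_Dg
proof (intro allI impI)
  fix k x y z assume h: "x \<in> Dg P k" "z \<in> Dg P k" "x \<le> y" "y \<le> z"
  show "y \<in> Dg P k"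
  proof (cases "k = m")
    case True then show ?thesis using h DgP_m by auto
  next
    case F1: False
    show ?thesis
    proof (cases "k = m + 1")
      case True then show ?thesis using h DgP_m1 by auto
    next
      case False
      then show ?thesis using h F1 DgP_other cv unfolding conv_iff_Dg by metis
    qed
  qed
qed

lemma lastP: "lastdiag_index P = m + 1"
proof (rule lastdiag_eqI[OF finP])
  show "m + 1 \<in> diags P" using DgP_m1 core diags_iff by auto
  fix c assume "c \<in> P"
  then have "cd (fst c + snd c) (fst c) \<in> P" using cell_cd[of c] by simp
  then have "cd (fst c + snd c) (fst c) \<in> Q \<or> fst c + snd c = m \<or> fst c + snd c = m + 1"
    unfolding memP by auto
  then show "fst c + snd c \<le> m + 1" using dgQ[of "cd (fst c + snd c) (fst c)"] by auto
qed

lemma diagsP: "diags P = insert (m+1) (diags Q)"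
proof (rule set_eqI)
  fix k
  have mQ: "m \<in> diags Q" using last_in_diags fin ne by blast
  show "k \<in> diags P \<longleftrightarrow> k \<in> insert (m+1) (diags Q)"
  proof (cases "k = m")
    case True then show ?thesis using mQ DgP_m core by (simp add: diags_iff)
  next
    case F1: False
    show ?thesis
    proof (cases "k = m + 1")
      case True then show ?thesis using DgP_m1 core by (simp add: diags_iff)
    next
      case False then show ?thesis using F1 DgP_other by (simp add: diags_iff)
    qed
  qed
qed

lemma diP: "di P = di Q + 1"
proof -
  have "m + 1 \<notin> diags Q" using DgQ_gt[of "m+1"] by (simp add: diags_iff)
  then show ?thesis unfolding di_def diagsP using diags_finite[OF fin] by simp
qed

lemma laP: "la P = la Q + el + er + 1"
proof -
  have "la P = card {a..b+1}" unfolding la_Dg lastP DgP_m1 ..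
  moreover have "la Q = card {c1 Q..c2 Q}" unfolding la_Dg core(1) ..
  ultimately show ?thesis using core(2) by simp
qed

lemma nosesP: "nose_left P" "nose_right P" "noses P = 2"
proof -
  have ab: "a \<le> b" using core(2) by simp
  have ia: "nose_ia P = a" unfolding nose_ia_Dg lastP using DgP_m ab by (simp add: Min_Icc)
  have ib: "nose_ib P = b" unfolding nose_ib_Dg lastP using DgP_m ab by (simp add: Max_Icc)
  show "nose_left P" unfolding nose_left_Dg ia lastP DgP_m1 using core(2) by simp
  show "nose_right P" unfolding nose_right_Dg ib lastP DgP_m1 using core(2) by simp
  then show "noses P = 2" using \<open>nose_left P\<close> by (simp add: noses_def)
qed

lemma N_conn: "a \<le> j \<Longrightarrow> j \<le> b + 1 \<Longrightarrow> (cd (m+1) j, cd (m+1) a) \<in> (arel P)\<^sup>*"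
proof (induction j rule: int_ge_induct)
  case base then show ?case by simp
next
  case (step j)
  have j: "a \<le> j" "j \<le> b" using step by auto
  have m1: "cd (m+1) (j+1) \<in> P" "cd m j \<in> P" "cd (m+1) j \<in> P" using j by (auto simp: memP)
  have "(cd (m+1) (j+1), cd m j) \<in> (arel P)\<^sup>*"
    by (rule arel_step) (use m1 in \<open>auto simp: adj_cd\<close>)
  moreover have "(cd m j, cd (m+1) j) \<in> (arel P)\<^sup>*"
    by (rule arel_step) (use m1 in \<open>auto simp: adj_cd\<close>)
  moreover have "(cd (m+1) j, cd (m+1) a) \<in> (arel P)\<^sup>*" using step j by auto
  ultimately show ?case by (meson rtrancl_trans)
qed

lemma L_conn: "a \<le> j \<Longrightarrow> j \<le> b \<Longrightarrow> (cd m j, cd (m+1) a) \<in> (arel P)\<^sup>*"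
proof -
  assume j: "a \<le> j" "j \<le> b"
  have m1: "cd m j \<in> P" "cd (m+1) j \<in> P" using j by (auto simp: memP)
  have "(cd m j, cd (m+1) j) \<in> (arel P)\<^sup>*"
    by (rule arel_step) (use m1 in \<open>auto simp: adj_cd\<close>)
  moreover have "(cd (m+1) j, cd (m+1) a) \<in> (arel P)\<^sup>*" using N_conn[of j] j by simp
  ultimately show ?thesis by (meson rtrancl_trans)
qed

lemma all_conn: "c \<in> P \<Longrightarrow> (c, cd (m+1) a) \<in> (arel P)\<^sup>*"
proof -
  assume c: "c \<in> P"
  show ?thesis
  proof (cases "c \<in> Q")
    case True
    then obtain i where i: "i \<in> Dg Q m" "(c, cd m i) \<in> (arel Q)\<^sup>*" using hc by blast
    then have "(c, cd m i) \<in> (arel P)\<^sup>*" using arel_mono[OF QsubP] by blast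
    moreover have "a \<le> i" "i \<le> b" using i core by auto
    ultimately show ?thesis using L_conn by (meson rtrancl_trans)
  next
    case False
    then obtain i where "c = cd m i \<and> i \<in> {a..b} \<or> c = cd (m+1) i \<and> i \<in> {a..b+1}"
      using c unfolding constr_def by auto
    then show ?thesis using L_conn N_conn by auto
  qed
qed

lemma connP: "edge_connected P"
  unfolding ec_def2
proof (intro ballI)
  fix x y assume "x \<in> P" "y \<in> P"
  then have "(x, cd (m+1) a) \<in> (arel P)\<^sup>*" "(y, cd (m+1) a) \<in> (arel P)\<^sup>*" using all_conn by auto
  then show "(x, y) \<in> (arel P)\<^sup>*" using arel_sym by (meson rtrancl_trans)
qed

lemma DCP_P: "DCP P" using finP PneP connP convP by (simp add: DCP_iff)

end

lemma arel_diag: "arel (cd m ` S) = {}"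
  by (auto simp: arel_def adj_cd)

lemma card_cd_img: "card (cd m ` S) = card S"
  by (rule card_image) (auto simp: inj_on_def)

lemma crossN:
  fixes X :: "cell set" and S :: "int set" and m lo hi :: int
  assumes dg: "\<And>x. x \<in> X \<Longrightarrow> fst x + snd x \<le> m"
    and dm: "\<And>i. cd m i \<in> X \<longleftrightarrow> i \<in> S" and sub: "S \<subseteq> {lo..hi}" and finS: "finite S"
  shows "card (cross X (cd (m+1) ` {lo..hi+1})) = 2 * card S"
proof -
  let ?f1 = "\<lambda>i. (cd m i, cd (m+1) i)" and ?f2 = "\<lambda>i. (cd m i, cd (m+1) (i+1))"
  have eq: "cross X (cd (m+1) ` {lo..hi+1}) = ?f1 ` S \<union> ?f2 ` S"
  proof (rule set_eqI)
    fix p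
    show "p \<in> cross X (cd (m+1) ` {lo..hi+1}) \<longleftrightarrow> p \<in> ?f1 ` S \<union> ?f2 ` S"
    proof
      assume "p \<in> cross X (cd (m+1) ` {lo..hi+1})"
      then obtain x j where p: "p = (x, cd (m+1) j)" "x \<in> X" "adj x (cd (m+1) j)"
        by (auto simp: cross_def)
      obtain k i where x: "x = cd k i" using cell_cd[of x] by blast
      have "k \<le> m" using dg[OF p(2)] x by simp
      then have "k = m \<and> (j = i \<or> j = i + 1)" using p(3) unfolding x adj_cd by auto
      moreover have "i \<in> S" using p(2) x dm calculation by auto
      ultimately show "p \<in> ?f1 ` S \<union> ?f2 ` S" using p x by auto
    next
      assume "p \<in> ?f1 ` S \<union> ?f2 ` S"
      then obtain i where i: "i \<in> S" "p = ?f1 i \<or> p = ?f2 i" by auto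
      have "cd m i \<in> X" using dm i by simp
      moreover have "i \<in> {lo..hi+1}" "i+1 \<in> {lo..hi+1}" using sub i by auto
      ultimately show "p \<in> cross X (cd (m+1) ` {lo..hi+1})"
        using i by (auto simp: cross_def adj_cd)
    qed
  qed
  have "card (?f1 ` S \<union> ?f2 ` S) = card (?f1 ` S) + card (?f2 ` S)"
    by (rule card_Un_disjoint) (use finS in auto)
  moreover have "card (?f1 ` S) = card S" by (rule card_image) (auto simp: inj_on_def)
  moreover have "card (?f2 ` S) = card S" by (rule card_image) (auto simp: inj_on_def)
  ultimately show ?thesis using eq by simp
qed

context cst begin

abbreviation "E \<equiv> cd m ` ({a..b} - {c1 Q..c2 Q})"
abbreviation "N \<equiv> cd (m+1) ` {a..b+1}"

lemma P_split: "P = Q \<union> (E \<union> N)"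
proof -
  have "cd m ` {c1 Q..c2 Q} \<subseteq> Q" using core(1) by (auto simp: mem_cd_Dg)
  then show ?thesis unfolding constr_def by auto
qed

lemma disjQ: "Q \<inter> (E \<union> N) = {}"
proof -
  have "x \<notin> Q" if "x \<in> E" for x using that core(1) by (auto simp: mem_cd_Dg)
  moreover have "x \<notin> Q" if "x \<in> N" for x using that DgQ_gt[of "m+1"] by (auto simp: mem_cd_Dg)
  ultimately show ?thesis by blast
qed

lemma disjEN: "E \<inter> N = {}" by auto

lemma card_E: "card E = el + er"
proof -
  have "card ({a..b} - {c1 Q..c2 Q}) = card {a..b} - card {c1 Q..c2 Q}"
    by (rule card_Diff_subset) auto
  then show ?thesis unfolding card_cd_img using core(2) by simp
qed

lemma card_N: "card N = nat (c2 Q - c1 Q + 1) + el + er + 1"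
  unfolding card_cd_img using core(2) by simp

lemma crossQE: "cross Q E = {}"
  using hn core(1) by (auto simp: cross_def)

lemma peP: "pe P = pe Q + 4 + 4 * (el + er)"
proof -
  have fE: "finite E" and fN: "finite N" by auto
  have cP: "card P = card Q + (card E + card N)"
    unfolding P_split using disjQ disjEN fin fE fN by (simp add: card_Un_disjoint)
  have a1: "card (arel P) = card (arel Q) + card (arel (E \<union> N)) + 2 * card (cross Q (E \<union> N))"
    unfolding P_split by (rule card_arel_Un) (use fin fE fN disjQ in auto)
  have a2: "card (arel (E \<union> N)) = 2 * card (cross E N)"
    using card_arel_Un[OF fE fN disjEN] by (simp add: arel_diag)
  have "cross Q (E \<union> N) = cross Q E \<union> cross Q N" by (auto simp: cross_def)
  then have a3: "cross Q (E \<union> N) = cross Q N" using crossQE by simp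
  have cQN: "card (cross Q N) = 2 * card {c1 Q..c2 Q}"
  proof (rule crossN)
    show "\<And>x. x \<in> Q \<Longrightarrow> fst x + snd x \<le> m" using dgQ by blast
    show "\<And>i. cd m i \<in> Q \<longleftrightarrow> i \<in> {c1 Q..c2 Q}" using core(1) by (simp add: mem_cd_Dg)
    show "{c1 Q..c2 Q} \<subseteq> {a..b}" by auto
  qed simp
  have cEN: "card (cross E N) = 2 * card ({a..b} - {c1 Q..c2 Q})"
  proof (rule crossN)
    show "\<And>x. x \<in> E \<Longrightarrow> fst x + snd x \<le> m" by auto
    show "\<And>i. cd m i \<in> E \<longleftrightarrow> i \<in> {a..b} - {c1 Q..c2 Q}" by auto
  qed auto
  have cE2: "card ({a..b} - {c1 Q..c2 Q}) = card E" unfolding card_cd_img ..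
  have p1: "pe P + card (arel P) = 4 * card P" by (rule pe_formula[OF finP])
  have p2: "pe Q + card (arel Q) = 4 * card Q" by (rule pe_formula[OF fin])
  have cc: "card {c1 Q..c2 Q} = nat (c2 Q - c1 Q + 1)" by simp
  show ?thesis using p1 p2 cP a1 a2 a3 cQN cEN cE2 card_E card_N cc by simp
qed

end

lemma two_cells: "di P \<ge> 2 \<Longrightarrow> c \<in> P \<Longrightarrow> \<exists>c'\<in>P. c' \<noteq> c"
proof (rule ccontr)
  assume h: "di P \<ge> 2" "c \<in> P" "\<not> (\<exists>c'\<in>P. c' \<noteq> c)"
  then have Pc: "P = {c}" by blast
  obtain x y where c: "c = (x, y)" by (cases c)
  have "diags P = {x + y}" unfolding Pc c diags_def by simp
  then show False using h(1) by (simp add: di_def)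
qed

lemma has_nbr: "DCP P \<Longrightarrow> di P \<ge> 2 \<Longrightarrow> c \<in> P \<Longrightarrow> \<exists>c'\<in>P. adj c c'"
  using two_cells conn_nbr by (metis DCP_iff)

lemma last_nbr:
  assumes "DCP P" "di P \<ge> 2" "i \<in> Dg P (lastdiag_index P)"
  shows "i \<in> Dg P (lastdiag_index P - 1) \<or> i - 1 \<in> Dg P (lastdiag_index P - 1)"
proof -
  let ?M = "lastdiag_index P"
  have fin: "finite P" using assms(1) by (simp add: DCP_iff)
  have "cd ?M i \<in> P" using assms(3) by (simp add: mem_cd_Dg)
  then obtain c where c: "c \<in> P" "adj (cd ?M i) c" using has_nbr assms by blast
  have "c \<noteq> cd (?M+1) i" "c \<noteq> cd (?M+1) (i+1)"
    using dg_le_last[OF fin c(1)] by auto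
  then have "c = cd (?M - 1) i \<or> c = cd (?M - 1) (i - 1)" using adj_cases_cd[OF c(2)] by blast
  then show ?thesis using c(1) by (auto simp: mem_cd_Dg)
qed

lemma int_interval:
  fixes S :: "int set"
  assumes "finite S" "S \<noteq> {}" "\<And>x y z. x \<in> S \<Longrightarrow> z \<in> S \<Longrightarrow> x \<le> y \<Longrightarrow> y \<le> z \<Longrightarrow> y \<in> S"
  shows "S = {Min S..Max S}"
proof (rule set_eqI)
  fix y
  have mi: "Min S \<in> S" and ma: "Max S \<in> S" using assms by auto
  show "y \<in> S \<longleftrightarrow> y \<in> {Min S..Max S}"
  proof
    assume "y \<in> S" then show "y \<in> {Min S..Max S}" using assms(1) by simp
  next
    assume "y \<in> {Min S..Max S}" then show "y \<in> S" using assms(3)[OF mi ma] by simp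
  qed
qed

definition dK :: "cell set \<Rightarrow> int set" where
  "dK P = {i \<in> Dg P (lastdiag_index P - 1). i \<in> Dg P (lastdiag_index P - 2) \<or> i - 1 \<in> Dg P (lastdiag_index P - 2)}"

definition dQ :: "cell set \<Rightarrow> cell set" where
  "dQ P = {c \<in> P. fst c + snd c \<le> lastdiag_index P - 2} \<union> cd (lastdiag_index P - 1) ` dK P"

definition del :: "cell set \<Rightarrow> nat" where "del P = nat (Min (dK P) - nose_ia P)"
definition der :: "cell set \<Rightarrow> nat" where "der P = nat (nose_ib P - Max (dK P))"

definition clamp :: "int \<Rightarrow> int \<Rightarrow> int \<Rightarrow> int" where "clamp lo hi x = max lo (min hi x)"

locale dcmp =
  fixes P :: "cell set"
  assumes dcp: "DCP P" and di3: "di P \<ge> 3" and two: "noses P = 2"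
begin

abbreviation "M \<equiv> lastdiag_index P"
abbreviation "K \<equiv> dK P"
abbreviation "D1 \<equiv> Dg P (M - 1)"
abbreviation "D2 \<equiv> Dg P (M - 2)"
abbreviation "ia \<equiv> nose_ia P"
abbreviation "ib \<equiv> nose_ib P"

lemma fin: "finite P" and ne: "P \<noteq> {}" and cv: "conv P" and ec: "edge_connected P"
  using dcp by (auto simp: DCP_iff)

lemma dgP: "c \<in> P \<Longrightarrow> fst c + snd c \<le> M" using dg_le_last fin by blast

lemma DgP_gt: "k > M \<Longrightarrow> Dg P k = {}"
proof -
  assume k: "k > M"
  { fix i assume "i \<in> Dg P k"
    then have "cd k i \<in> P" by (simp add: mem_cd_Dg)
    then have "k \<le> M" using dgP[of "cd k i"] by simp
    then have False using k by simp }
  then show ?thesis by blast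
qed

lemma lnbr: "i \<in> Dg P M \<Longrightarrow> i \<in> D1 \<or> i - 1 \<in> D1"
  using last_nbr[OF dcp] di3 by simp

lemma D1_ne: "D1 \<noteq> {}"
proof -
  obtain i where "i \<in> Dg P M" using Dg_last_ne[OF fin ne] by blast
  then show ?thesis using lnbr by blast
qed

lemma D1_int: "D1 = {ia..ib}"
  unfolding nose_ia_Dg nose_ib_Dg using Dg_interval[OF cv fin D1_ne] .

lemma ia_le_ib: "ia \<le> ib" using D1_int D1_ne by auto

lemma DM: "Dg P M = {ia..ib+1}"
proof -
  have nl: "nose_left P" and nr: "nose_right P" using two by (auto simp: noses_def split: if_splits)
  have a: "ia \<in> Dg P M" using nl by (simp add: nose_left_Dg)
  have b: "ib + 1 \<in> Dg P M" using nr by (simp add: nose_right_Dg)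
  show ?thesis
  proof (rule set_eqI)
    fix i show "i \<in> Dg P M \<longleftrightarrow> i \<in> {ia..ib+1}"
    proof
      assume "i \<in> Dg P M"
      then have "i \<in> D1 \<or> i - 1 \<in> D1" by (rule lnbr)
      then show "i \<in> {ia..ib+1}" unfolding D1_int by auto
    next
      assume "i \<in> {ia..ib+1}" then show "i \<in> Dg P M" using conv_Dg[OF cv a b] by auto
    qed
  qed
qed

lemma low_exists: "\<exists>c\<in>P. fst c + snd c \<le> M - 2"
proof (rule ccontr)
  assume "\<not> ?thesis"
  then have "diags P \<subseteq> {M - 1, M}" using dgP by (force simp: diags_def)
  then have "card (diags P) \<le> card {M - 1, M}" by (rule card_mono[rotated]) simp
  then show False using di3 by (simp add: di_def)
qed

lemma K_ne: "K \<noteq> {}"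
proof -
  obtain x0 where x0: "x0 \<in> P" "fst x0 + snd x0 \<le> M - 2" using low_exists by blast
  obtain i where "i \<in> Dg P M" using Dg_last_ne[OF fin ne] by blast
  then have y0: "cd M i \<in> P" by (simp add: mem_cd_Dg)
  obtain x y where xy: "x \<in> P" "fst x + snd x \<le> M - 2" "y \<in> P" "\<not> fst y + snd y \<le> M - 2" "adj x y"
    using conn_split[OF ec x0(1), of "{c. fst c + snd c \<le> M - 2}" "cd M i"] x0 y0 by auto
  obtain k j where x: "x = cd k j" using cell_cd[of x] by blast
  obtain k' j' where y: "y = cd k' j'" using cell_cd[of y] by blast
  have "(k' = k + 1 \<and> (j' = j \<or> j' = j + 1)) \<or> (k' = k - 1 \<and> (j' = j \<or> j' = j - 1))"
    using xy(5) unfolding x y adj_cd .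
  moreover have "k \<le> M - 2" "\<not> k' \<le> M - 2" using xy(2,4) x y by auto
  ultimately have "k = M - 2" "k' = M - 1" "j' = j \<or> j' = j + 1" by auto
  then have "j' \<in> K" using xy(1,3) x y by (auto simp: dK_def mem_cd_Dg)
  then show ?thesis by blast
qed

lemma K_sub: "K \<subseteq> D1" by (auto simp: dK_def)

lemma finK: "finite K" using K_sub finite_Dg[OF fin] by (meson finite_subset)

lemma K_conv: "x \<in> K \<Longrightarrow> z \<in> K \<Longrightarrow> x \<le> y \<Longrightarrow> y \<le> z \<Longrightarrow> y \<in> K"
proof -
  assume h: "x \<in> K" "z \<in> K" "x \<le> y" "y \<le> z"
  have y1: "y \<in> D1" using conv_Dg[OF cv, of x "M-1" z y] h K_sub by auto
  obtain x' where x': "x' \<in> D2" "x' = x \<or> x' = x - 1" using h(1) by (auto simp: dK_def)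
  obtain z' where z': "z' \<in> D2" "z' = z \<or> z' = z - 1" using h(2) by (auto simp: dK_def)
  show "y \<in> K"
  proof (cases "y = x")
    case True then show ?thesis using h by simp
  next
    case False
    then have "x' \<le> y - 1" "y - 1 \<le> z'" using x' z' h by auto
    then have "y - 1 \<in> D2" using conv_Dg[OF cv x'(1) z'(1)] by blast
    then show ?thesis using y1 by (simp add: dK_def)
  qed
qed

abbreviation "k1 \<equiv> Min K"
abbreviation "k2 \<equiv> Max K"

lemma K_int: "K = {k1..k2}"
  by (rule int_interval[OF finK K_ne]) (rule K_conv)

lemma k12: "k1 \<le> k2" "ia \<le> k1" "k2 \<le> ib"
proof -
  have "k1 \<in> K" "k2 \<in> K" using finK K_ne by auto
  then show "k1 \<le> k2" "ia \<le> k1" "k2 \<le> ib" using K_sub D1_int finK by auto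
qed

lemma K_step: "i \<in> K \<Longrightarrow> i + 1 \<in> K \<Longrightarrow> i \<in> D2"
proof -
  assume h: "i \<in> K" "i + 1 \<in> K"
  show "i \<in> D2"
  proof (rule ccontr)
    assume n: "i \<notin> D2"
    then have "i - 1 \<in> D2" "i + 1 \<in> D2" using h by (auto simp: dK_def)
    then show False using conv_Dg[OF cv, of "i - 1" "M - 2" "i + 1" i] n by simp
  qed
qed

end

lemma clamp_in: "lo \<le> hi \<Longrightarrow> clamp lo hi x \<in> {lo..hi}" by (auto simp: clamp_def)
lemma clamp_id: "x \<in> {lo..hi} \<Longrightarrow> clamp lo hi x = x" by (auto simp: clamp_def)
lemma clamp_lip: "\<bar>clamp lo hi x - clamp lo hi y\<bar> \<le> \<bar>x - y\<bar>" by (auto simp: clamp_def)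

lemma adj_fst: "adj c c' \<Longrightarrow> \<bar>fst c - fst c'\<bar> \<le> 1"
  by (cases c) (auto simp: adj_iff)

context dcmp begin

abbreviation "Q \<equiv> dQ P"

lemma memQ: "cd k i \<in> Q \<longleftrightarrow> (k \<le> M - 2 \<and> i \<in> Dg P k) \<or> (k = M - 1 \<and> i \<in> K)"
  unfolding dQ_def Un_iff cd_img mem_Collect_eq by (auto simp: mem_cd_Dg)

lemma DgQ: "i \<in> Dg Q k \<longleftrightarrow> (k \<le> M - 2 \<and> i \<in> Dg P k) \<or> (k = M - 1 \<and> i \<in> K)"
  using memQ by (simp add: mem_cd_Dg)

lemma QsubP: "Q \<subseteq> P"
  using K_sub by (auto simp: dQ_def mem_cd_Dg)

lemma finQ: "finite Q" using QsubP fin by (rule finite_subset)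

lemma neQ: "Q \<noteq> {}" using K_ne by (auto simp: dQ_def)

lemma dgQ_le: "c \<in> Q \<Longrightarrow> fst c + snd c \<le> M - 1"
  by (auto simp: dQ_def)

lemma lastQ: "lastdiag_index Q = M - 1"
proof (rule lastdiag_eqI[OF finQ])
  show "M - 1 \<in> diags Q" using K_ne DgQ[of _ "M-1"] by (auto simp: diags_iff)
qed (rule dgQ_le)

lemma DgQ_last: "Dg Q (M - 1) = K" using DgQ[of _ "M-1"] by auto
lemma DgQ_low: "k \<le> M - 2 \<Longrightarrow> Dg Q k = Dg P k" using DgQ[of _ k] by auto

lemma convQ: "conv Q"
  unfolding conv_iff_Dg
proof (intro allI impI)
  fix k x y z assume h: "x \<in> Dg Q k" "z \<in> Dg Q k" "x \<le> y" "y \<le> z"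
  show "y \<in> Dg Q k"
  proof (cases "k \<le> M - 2")
    case True then show ?thesis using h DgQ_low conv_Dg[OF cv] by metis
  next
    case False
    then have "k = M - 1" using h(1) DgQ by auto
    then show ?thesis using h DgQ_last K_conv by metis
  qed
qed

lemma c1Q: "c1 Q = k1" unfolding c1_def lastQ DgQ_last ..
lemma c2Q: "c2 Q = k2" unfolding c2_def lastQ DgQ_last ..

lemma KK: "i \<in> K \<Longrightarrow> j \<in> K \<Longrightarrow> \<bar>i - j\<bar> \<le> 1 \<Longrightarrow> (cd (M-1) i, cd (M-1) j) \<in> (arel Q)\<^sup>*"
proof -
  have step: "(cd (M-1) i, cd (M-1) (i+1)) \<in> (arel Q)\<^sup>*" if "i \<in> K" "i + 1 \<in> K" for i
  proof -
    have i2: "i \<in> D2" using K_step that by blast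
    have q: "cd (M-2) i \<in> Q" "cd (M-1) i \<in> Q" "cd (M-1) (i+1) \<in> Q" using i2 that by (auto simp: memQ)
    have "(cd (M-1) i, cd (M-2) i) \<in> (arel Q)\<^sup>*"
      by (rule arel_step) (use q in \<open>auto simp: adj_cd\<close>)
    moreover have "(cd (M-2) i, cd (M-1) (i+1)) \<in> (arel Q)\<^sup>*"
      by (rule arel_step) (use q in \<open>auto simp: adj_cd\<close>)
    ultimately show ?thesis by (meson rtrancl_trans)
  qed
  assume h: "i \<in> K" "j \<in> K" "\<bar>i - j\<bar> \<le> 1"
  then have "j = i \<or> j = i + 1 \<or> i = j + 1" by auto
  then show ?thesis
  proof (elim disjE)
    assume "j = i" then show ?thesis by simp
  next
    assume "j = i + 1" then show ?thesis using step h by simp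
  next
    assume "i = j + 1" then show ?thesis using step[of j] h arel_sym by simp
  qed
qed

definition r :: "cell \<Rightarrow> cell" where
  "r c = (if fst c + snd c \<le> M - 2 then c else cd (M-1) (clamp k1 k2 (fst c)))"

lemma r_in_K: "\<not> fst c + snd c \<le> M - 2 \<Longrightarrow> r c = cd (M-1) (clamp k1 k2 (fst c)) \<and> clamp k1 k2 (fst c) \<in> K"
  using clamp_in[OF k12(1)] K_int by (simp add: r_def)

lemma r_Q: "q \<in> Q \<Longrightarrow> r q = q"
proof -
  assume q: "q \<in> Q"
  obtain k i where qi: "q = cd k i" using cell_cd[of q] by blast
  show "r q = q"
  proof (cases "k \<le> M - 2")
    case True then show ?thesis using qi by (simp add: r_def)
  next
    case False
    then have "k = M - 1" "i \<in> K" using q qi memQ by auto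
    then show ?thesis using qi K_int clamp_id[of i k1 k2] by (simp add: r_def)
  qed
qed

lemma connQ: "edge_connected Q"
proof (rule retract[OF ec QsubP r_Q])
  fix c c' assume cc: "c \<in> P" "c' \<in> P" "adj c c'"
  obtain k i where c: "c = cd k i" using cell_cd[of c] by blast
  obtain k' j where c': "c' = cd k' j" using cell_cd[of c'] by blast
  have ad: "(k' = k + 1 \<and> (j = i \<or> j = i + 1)) \<or> (k' = k - 1 \<and> (j = i \<or> j = i - 1))"
    using cc(3) unfolding c c' adj_cd .
  have iP: "i \<in> Dg P k" "j \<in> Dg P k'" using cc c c' by (auto simp: mem_cd_Dg)
  show "(r c, r c') \<in> (arel Q)\<^sup>*"
  proof (cases "k \<le> M - 2")
    case kl: True
    show ?thesis
    proof (cases "k' \<le> M - 2")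
      case True
      then have "c \<in> Q" "c' \<in> Q" using kl iP c c' by (auto simp: memQ)
      then show ?thesis using r_Q cc(3) arel_step by simp
    next
      case False
      then have "k = M - 2" "k' = M - 1" "j = i \<or> j = i + 1" using kl ad by auto
      then have "j \<in> K" using iP by (auto simp: dK_def)
      then have "c \<in> Q" "c' \<in> Q" using kl iP c c' \<open>k' = M - 1\<close> by (auto simp: memQ)
      then show ?thesis using r_Q cc(3) arel_step by simp
    qed
  next
    case kh: False
    show ?thesis
    proof (cases "k' \<le> M - 2")
      case True
      then have "k' = M - 2" "k = M - 1" "i = j \<or> i = j + 1" using kh ad by auto
      then have "i \<in> K" using iP by (auto simp: dK_def)
      then have "c \<in> Q" "c' \<in> Q" using True iP c c' \<open>k = M - 1\<close> by (auto simp: memQ)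
      then show ?thesis using r_Q cc(3) arel_step by simp
    next
      case False
      have "\<bar>i - j\<bar> \<le> 1" using ad by auto
      then have "\<bar>clamp k1 k2 i - clamp k1 k2 j\<bar> \<le> 1" using clamp_lip[of k1 k2 i j] by linarith
      then show ?thesis using r_in_K[of c] r_in_K[of c'] kh False c c' KK by auto
    qed
  qed
qed

lemma dcpQ: "DCP Q" using finQ neQ connQ convQ by (simp add: DCP_iff)

lemma el_pos: "del P > 0 \<Longrightarrow> nose_left Q"
proof -
  assume "del P > 0"
  then have lt: "ia < k1" by (simp add: del_def)
  have k1K: "k1 \<in> K" using finK K_ne by simp
  have "k1 - 1 \<in> D1" using lt k12 D1_int by auto
  moreover have "k1 - 1 \<notin> K"
  proof
    assume "k1 - 1 \<in> K" then have "k1 \<le> k1 - 1" using Min_le[OF finK] by blast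
    then show False by simp
  qed
  ultimately have n1: "k1 - 1 \<notin> D2" "k1 - 2 \<notin> D2" by (auto simp: dK_def)
  then have k1D2: "k1 \<in> D2" using k1K by (auto simp: dK_def)
  have fD2: "finite D2" using finite_Dg[OF fin] .
  have "Min D2 \<le> k1" using k1D2 fD2 by simp
  moreover have "Min D2 \<in> D2" using k1D2 fD2 by (metis Min_in empty_iff)
  ultimately have "\<not> Min D2 \<le> k1 - 1"
  proof -
    assume a1: "Min D2 \<le> k1" "Min D2 \<in> D2"
    show ?thesis
    proof
      assume "Min D2 \<le> k1 - 1"
      then have "k1 - 1 \<in> D2" using conv_Dg[OF cv a1(2) k1D2, of "k1 - 1"] by simp
      then show False using n1 by simp
    qed
  qed
  then have "Min D2 = k1" using \<open>Min D2 \<le> k1\<close> by linarith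
  moreover have "nose_ia Q = Min D2" unfolding nose_ia_Dg lastQ using DgQ_low[of "M - 1 - 1"] by simp
  ultimately show "nose_left Q" unfolding nose_left_Dg lastQ DgQ_last using k1K by simp
qed

lemma er_pos: "der P > 0 \<Longrightarrow> nose_right Q"
proof -
  assume "der P > 0"
  then have lt: "k2 < ib" by (simp add: der_def)
  have k2K: "k2 \<in> K" using finK K_ne by simp
  have "k2 + 1 \<in> D1" using lt k12 D1_int by auto
  moreover have "k2 + 1 \<notin> K"
  proof
    assume "k2 + 1 \<in> K" then have "k2 + 1 \<le> k2" using Max_ge[OF finK] by blast
    then show False by simp
  qed
  ultimately have n1: "k2 + 1 \<notin> D2" "k2 \<notin> D2" by (auto simp: dK_def)
  then have k2D2: "k2 - 1 \<in> D2" using k2K by (auto simp: dK_def)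
  have fD2: "finite D2" using finite_Dg[OF fin] .
  have "k2 - 1 \<le> Max D2" using k2D2 fD2 by simp
  moreover have "Max D2 \<in> D2" using k2D2 fD2 by (metis Max_in empty_iff)
  ultimately have "\<not> k2 \<le> Max D2"
  proof -
    assume a1: "k2 - 1 \<le> Max D2" "Max D2 \<in> D2"
    show ?thesis
    proof
      assume "k2 \<le> Max D2"
      then have "k2 \<in> D2" using conv_Dg[OF cv k2D2 a1(2), of k2] by simp
      then show False using n1 by simp
    qed
  qed
  then have "Max D2 = k2 - 1" using \<open>k2 - 1 \<le> Max D2\<close> by linarith
  moreover have "nose_ib Q = Max D2" unfolding nose_ib_Dg lastQ using DgQ_low[of "M - 1 - 1"] by simp
  ultimately show "nose_right Q" unfolding nose_right_Dg lastQ DgQ_last using k2K by simp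
qed

lemma ael: "k1 - int (del P) = ia" using k12 by (simp add: del_def)
lemma ber: "k2 + int (der P) = ib" using k12 by (simp add: der_def)

lemma cstQ: "cst Q (del P) (der P)"
proof
  show "finite Q" "Q \<noteq> {}" "conv Q" by (rule finQ, rule neQ, rule convQ)
  show "\<And>q. q \<in> Q \<Longrightarrow> \<exists>i\<in>Dg Q (lastdiag_index Q). (q, cd (lastdiag_index Q) i) \<in> (arel Q)\<^sup>*"
  proof -
    fix q assume "q \<in> Q"
    moreover have "cd (M-1) k1 \<in> Q" using finK K_ne by (simp add: memQ)
    ultimately have "(q, cd (M-1) k1) \<in> (arel Q)\<^sup>*" using connQ by (simp add: ec_def2)
    moreover have "k1 \<in> Dg Q (M-1)" using DgQ_last finK K_ne by simp
    ultimately show "\<exists>i\<in>Dg Q (lastdiag_index Q). (q, cd (lastdiag_index Q) i) \<in> (arel Q)\<^sup>*"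
      unfolding lastQ by blast
  qed
  show "\<And>q i. q \<in> Q \<Longrightarrow> i \<in> {c1 Q - int (del P)..c2 Q + int (der P)} \<Longrightarrow> i \<notin> Dg Q (lastdiag_index Q)
              \<Longrightarrow> \<not> adj q (cd (lastdiag_index Q) i)"
  proof
    fix q i assume h: "q \<in> Q" "i \<in> {c1 Q - int (del P)..c2 Q + int (der P)}" "i \<notin> Dg Q (lastdiag_index Q)"
      "adj q (cd (lastdiag_index Q) i)"
    have i1: "i \<in> D1" using h(2) unfolding c1Q c2Q ael ber D1_int .
    have iK: "i \<notin> K" using h(3) unfolding lastQ DgQ_last .
    then have n: "i \<notin> D2" "i - 1 \<notin> D2" using i1 by (auto simp: dK_def)
    have "adj (cd (M-1) i) q" using h(4) adj_sym unfolding lastQ by blast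
    then have "q = cd M i \<or> q = cd M (i+1) \<or> q = cd (M-2) i \<or> q = cd (M-2) (i-1)"
      using adj_cases_cd[of "M-1" i q] by (simp add: algebra_simps)
    then show False using h(1) n dgQ_le[OF h(1)] QsubP by (auto simp: mem_cd_Dg)
  qed
qed

lemma P_constr: "P = constr Q (del P) (der P)"
proof (rule set_eqI)
  fix c
  obtain k i where c: "c = cd k i" using cell_cd[of c] by blast
  have "c \<in> P \<longleftrightarrow> i \<in> Dg P k" using c by (simp add: mem_cd_Dg)
  moreover have "c \<in> constr Q (del P) (der P) \<longleftrightarrow> cd k i \<in> Q \<or> (k = M - 1 \<and> i \<in> {ia..ib}) \<or> (k = M \<and> i \<in> {ia..ib+1})"
    unfolding c constr_def Un_iff cd_img lastQ c1Q c2Q ael ber by simp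
  moreover have "i \<in> Dg P k \<longleftrightarrow> cd k i \<in> Q \<or> (k = M - 1 \<and> i \<in> {ia..ib}) \<or> (k = M \<and> i \<in> {ia..ib+1})"
  proof (cases "k \<le> M - 2")
    case True then show ?thesis by (simp add: memQ)
  next
    case F: False
    show ?thesis
    proof (cases "k = M - 1")
      case True then show ?thesis using D1_int K_sub by (auto simp: memQ)
    next
      case False
      have nq: "cd k i \<notin> Q" using F False by (simp add: memQ)
      have "k = M \<or> k > M" using F False by auto
      then show ?thesis
      proof
        assume "k = M" then show ?thesis using DM nq by simp
      next
        assume "k > M" then show ?thesis using DgP_gt[of k] nq by simp
      qed
    qed
  qed
  ultimately show "c \<in> P \<longleftrightarrow> c \<in> constr Q (del P) (der P)" by blast
qed

end

definition N2 :: "cell set \<Rightarrow> bool" where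
  "N2 P \<longleftrightarrow> (0,0) \<in> P \<and> (\<forall>c\<in>P. 0 \<le> fst c + snd c \<and> (fst c + snd c = 0 \<longrightarrow> 0 \<le> fst c))"

context cst begin

lemma iaP: "nose_ia P = a" unfolding nose_ia_Dg lastP using DgP_m core(2) by (simp add: Min_Icc)
lemma ibP: "nose_ib P = b" unfolding nose_ib_Dg lastP using DgP_m core(2) by (simp add: Max_Icc)

lemma N2P: "N2 Q \<Longrightarrow> 1 \<le> m \<or> (el = 0 \<and> er = 0) \<Longrightarrow> N2 P"
proof -
  assume n: "N2 Q" and h: "1 \<le> m \<or> (el = 0 \<and> er = 0)"
  have m0: "0 \<le> m" using n dgQ[of "(0,0)"] by (simp add: N2_def)
  show "N2 P" unfolding N2_def
  proof (intro conjI ballI)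
    show "(0,0) \<in> P" using n QsubP by (auto simp: N2_def)
    fix c assume c: "c \<in> P"
    obtain k i where ki: "c = cd k i" using cell_cd[of c] by blast
    have "cd k i \<in> Q \<or> (k = m \<and> i \<in> {a..b}) \<or> (k = m + 1 \<and> i \<in> {a..b+1})" using c ki memP by simp
    then have "cd k i \<in> Q \<or> (1 \<le> k)"
    proof (elim disjE)
      assume "k = m \<and> i \<in> {a..b}"
      then show ?thesis
      proof (cases "1 \<le> m")
        case False
        then have "el = 0" "er = 0" using h by auto
        then have "i \<in> Dg Q m" using \<open>k = m \<and> i \<in> {a..b}\<close> core(1) by simp
        then show ?thesis using \<open>k = m \<and> i \<in> {a..b}\<close> by (simp add: mem_cd_Dg)
      qed simp
    qed (use m0 in auto)
    then show "0 \<le> fst c + snd c" "fst c + snd c = 0 \<longrightarrow> 0 \<le> fst c"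
      using n ki by (auto simp: N2_def)
  qed
qed

end

lemma cst_of:
  assumes dq: "DCP Q" and d2: "di Q \<ge> 2" and nl: "el > 0 \<longrightarrow> nose_left Q" and nr: "er > 0 \<longrightarrow> nose_right Q"
  shows "cst Q el er"
proof -
  have fin: "finite Q" and ne: "Q \<noteq> {}" and cv: "conv Q" and ec: "edge_connected Q"
    using dq by (auto simp: DCP_iff)
  let ?m = "lastdiag_index Q"
  have core: "Dg Q ?m = {c1 Q..c2 Q}" "c1 Q \<le> c2 Q"
  proof -
    have "Dg Q ?m \<noteq> {}" using Dg_last_ne fin ne by blast
    then show "Dg Q ?m = {c1 Q..c2 Q}" unfolding c1_def c2_def using Dg_interval[OF cv fin] by blast
    then show "c1 Q \<le> c2 Q" using \<open>Dg Q ?m \<noteq> {}\<close> by auto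
  qed
  have lnb: "i \<in> Dg Q ?m \<Longrightarrow> i \<in> Dg Q (?m - 1) \<or> i - 1 \<in> Dg Q (?m - 1)" for i
    using last_nbr[OF dq d2] by blast
  have fD: "finite (Dg Q (?m - 1))" using finite_Dg[OF fin] .
  have c1n: "c1 Q \<in> Dg Q (?m - 1) \<or> c1 Q - 1 \<in> Dg Q (?m - 1)" using lnb core by simp
  have c2n: "c2 Q \<in> Dg Q (?m - 1) \<or> c2 Q - 1 \<in> Dg Q (?m - 1)" using lnb core by simp
  show ?thesis
  proof
    show "finite Q" "Q \<noteq> {}" "conv Q" by (rule fin, rule ne, rule cv)
    show "\<And>q. q \<in> Q \<Longrightarrow> \<exists>i\<in>Dg Q ?m. (q, cd ?m i) \<in> (arel Q)\<^sup>*"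
    proof -
      fix q assume "q \<in> Q"
      moreover have "cd ?m (c1 Q) \<in> Q" using core by (simp add: mem_cd_Dg)
      ultimately have "(q, cd ?m (c1 Q)) \<in> (arel Q)\<^sup>*" using ec by (simp add: ec_def2)
      then show "\<exists>i\<in>Dg Q ?m. (q, cd ?m i) \<in> (arel Q)\<^sup>*" using core by auto
    qed
    show "\<And>q i. q \<in> Q \<Longrightarrow> i \<in> {c1 Q - int el..c2 Q + int er} \<Longrightarrow> i \<notin> Dg Q ?m \<Longrightarrow> \<not> adj q (cd ?m i)"
    proof
      fix q i assume h: "q \<in> Q" "i \<in> {c1 Q - int el..c2 Q + int er}" "i \<notin> Dg Q ?m" "adj q (cd ?m i)"
      have "adj (cd ?m i) q" using h(4) adj_sym by blast
      then have "q = cd (?m+1) i \<or> q = cd (?m+1) (i+1) \<or> q = cd (?m - 1) i \<or> q = cd (?m - 1) (i - 1)"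
        by (rule adj_cases_cd)
      moreover have "q \<noteq> cd (?m+1) i" "q \<noteq> cd (?m+1) (i+1)" using dg_le_last[OF fin h(1)] by auto
      ultimately have q: "i \<in> Dg Q (?m - 1) \<or> i - 1 \<in> Dg Q (?m - 1)" using h(1) by (auto simp: mem_cd_Dg)
      have "i < c1 Q \<or> c2 Q < i" using h(3) core by auto
      then show False
      proof
        assume lt: "i < c1 Q"
        then have "el > 0" using h(2) by auto
        then have "nose_ia Q \<in> Dg Q ?m" using nl by (simp add: nose_left_Dg)
        then have "c1 Q \<le> nose_ia Q" using core by auto
        moreover have "nose_ia Q \<le> c1 Q"
        proof -
          have "Min (Dg Q (?m - 1)) \<le> c1 Q \<or> Min (Dg Q (?m - 1)) \<le> c1 Q - 1"
            using c1n fD Min_le by blast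
          then show ?thesis unfolding nose_ia_Dg by linarith
        qed
        ultimately have e: "nose_ia Q = c1 Q" by simp
        have "Min (Dg Q (?m - 1)) \<le> i - 1" if "i - 1 \<in> Dg Q (?m - 1)" by (rule Min_le[OF fD that])
        moreover have "Min (Dg Q (?m - 1)) \<le> i" if "i \<in> Dg Q (?m - 1)" by (rule Min_le[OF fD that])
        ultimately have "Min (Dg Q (?m - 1)) \<le> i" using q by fastforce
        then show False using e lt unfolding nose_ia_Dg by linarith
      next
        assume gt: "c2 Q < i"
        then have "er > 0" using h(2) by auto
        then have "nose_ib Q + 1 \<in> Dg Q ?m" using nr by (simp add: nose_right_Dg)
        then have "nose_ib Q + 1 \<le> c2 Q" using core by auto
        moreover have "c2 Q - 1 \<le> nose_ib Q"
        proof -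
          have "c2 Q \<le> Max (Dg Q (?m - 1)) \<or> c2 Q - 1 \<le> Max (Dg Q (?m - 1))"
            using c2n fD Max_ge by blast
          then show ?thesis unfolding nose_ib_Dg by linarith
        qed
        ultimately have e: "nose_ib Q = c2 Q - 1" by simp
        have "i - 1 \<le> Max (Dg Q (?m - 1))" if "i - 1 \<in> Dg Q (?m - 1)" by (rule Max_ge[OF fD that])
        moreover have "i \<le> Max (Dg Q (?m - 1))" if "i \<in> Dg Q (?m - 1)" by (rule Max_ge[OF fD that])
        ultimately have "i - 1 \<le> Max (Dg Q (?m - 1))" using q by fastforce
        then show False using e gt unfolding nose_ib_Dg by linarith
      qed
    qed
  qed
qed


lemma dec_constr:
  assumes dq: "DCP Q" and d2: "di Q \<ge> 2" and cs: "cst Q el er"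
  shows "dQ (constr Q el er) = Q" "del (constr Q el er) = el" "der (constr Q el er) = er"
proof -
  interpret cst Q el er by (rule cs)
  have L: "lastdiag_index P = m + 1" by (rule lastP)
  have e1: "m + 1 - 1 = m" "m + 1 - 2 = m - 1" by simp_all
  have D1: "Dg P m = {a..b}" by (rule DgP_m)
  have D2: "Dg P (m - 1) = Dg Q (m - 1)" by (rule DgP_other) simp_all
  have lnb: "i \<in> Dg Q m \<Longrightarrow> i \<in> Dg Q (m - 1) \<or> i - 1 \<in> Dg Q (m - 1)" for i
    using last_nbr[OF dq d2] by blast
  have K: "dK P = {c1 Q..c2 Q}"
  proof (rule set_eqI)
    fix i
    have "i \<in> dK P \<longleftrightarrow> i \<in> {a..b} \<and> (i \<in> Dg Q (m - 1) \<or> i - 1 \<in> Dg Q (m - 1))"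
      unfolding dK_def L e1 D1 D2 by simp
    also have "\<dots> \<longleftrightarrow> i \<in> {c1 Q..c2 Q}"
    proof
      assume h: "i \<in> {a..b} \<and> (i \<in> Dg Q (m - 1) \<or> i - 1 \<in> Dg Q (m - 1))"
      show "i \<in> {c1 Q..c2 Q}"
      proof (rule ccontr)
        assume n: "i \<notin> {c1 Q..c2 Q}"
        then have ni: "i \<notin> Dg Q m" using core by simp
        from h show False
        proof (elim conjE disjE)
          assume "i \<in> Dg Q (m - 1)"
          then have "cd (m - 1) i \<in> Q" by (simp add: mem_cd_Dg)
          moreover have "adj (cd (m - 1) i) (cd m i)" by (simp add: adj_cd)
          ultimately show False using hn[of "cd (m - 1) i" i] h ni by simp
        next
          assume "i - 1 \<in> Dg Q (m - 1)"
          then have "cd (m - 1) (i - 1) \<in> Q" by (simp add: mem_cd_Dg)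
          moreover have "adj (cd (m - 1) (i - 1)) (cd m i)" by (simp add: adj_cd)
          ultimately show False using hn[of "cd (m - 1) (i - 1)" i] h ni by simp
        qed
      qed
    next
      assume h: "i \<in> {c1 Q..c2 Q}"
      then have "i \<in> Dg Q m" using core by simp
      then show "i \<in> {a..b} \<and> (i \<in> Dg Q (m - 1) \<or> i - 1 \<in> Dg Q (m - 1))" using lnb h by auto
    qed
    finally show "i \<in> dK P \<longleftrightarrow> i \<in> {c1 Q..c2 Q}" .
  qed
  have mn: "Min (dK P) = c1 Q" "Max (dK P) = c2 Q" unfolding K using core(2) by (simp_all add: Min_Icc Max_Icc)
  show "del P = el" unfolding del_def mn iaP by simp
  show "der P = er" unfolding der_def mn ibP by simp
  show "dQ P = Q"
  proof (rule set_eqI)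
    fix c
    obtain k i where c: "c = cd k i" using cell_cd[of c] by blast
    have "c \<in> dQ P \<longleftrightarrow> (cd k i \<in> P \<and> k \<le> m - 1) \<or> (k = m \<and> i \<in> {c1 Q..c2 Q})"
      unfolding c dQ_def L e1 K Un_iff cd_img mem_Collect_eq by simp
    also have "\<dots> \<longleftrightarrow> cd k i \<in> Q"
    proof (cases "k \<le> m - 1")
      case True then show ?thesis using memP[of k i] by auto
    next
      case False
      then have "k = m \<or> k > m" by auto
      then show ?thesis
      proof
        assume "k = m" then show ?thesis using core by (simp add: mem_cd_Dg)
      next
        assume "k > m" then show ?thesis using DgQ_gt[of k] by (simp add: mem_cd_Dg)
      qed
    qed
    finally show "c \<in> dQ P \<longleftrightarrow> c \<in> Q" unfolding c .
  qed
qed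

lemma N2_di_last:
  assumes "N2 P" "finite P"
  shows "di P \<le> nat (lastdiag_index P) + 1"
proof -
  have "diags P \<subseteq> {0..lastdiag_index P}"
  proof
    fix k assume k: "k \<in> diags P"
    then obtain c where "c \<in> P" "fst c + snd c = k" by (auto simp: diags_def)
    then show "k \<in> {0..lastdiag_index P}" using assms dg_le_last[of P c] by (auto simp: N2_def)
  qed
  then have "card (diags P) \<le> card {0..lastdiag_index P}" by (rule card_mono[rotated]) simp
  then show ?thesis by (simp add: di_def)
qed

definition SS :: "nat \<Rightarrow> nat \<Rightarrow> nat \<Rightarrow> nat \<Rightarrow> cell set set" where
  "SS k n p l = {P. DCP P \<and> N2 P \<and> di P \<ge> 2 \<and> noses P = k \<and> di P = n \<and> pe P = p \<and> la P = l}"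

definition DD :: "nat \<Rightarrow> nat \<Rightarrow> nat \<Rightarrow> (cell set \<times> nat \<times> nat) set" where
  "DD n p l = {(Q, el, er). DCP Q \<and> N2 Q \<and> di Q \<ge> 2 \<and> di Q + 1 = n \<and> (0 < el \<longrightarrow> nose_left Q)
     \<and> (0 < er \<longrightarrow> nose_right Q) \<and> pe Q + 4 + 4 * (el + er) = p \<and> la Q + el + er + 1 = l}"

lemma bij_DD:
  assumes n3: "n \<ge> 3"
  shows "bij_betw (\<lambda>(Q, el, er). constr Q el er) (DD n p l) (SS 2 n p l)"
proof (rule bij_betw_byWitness[where f' = "\<lambda>P. (dQ P, del P, der P)"])
  show "\<forall>x\<in>DD n p l. (\<lambda>P. (dQ P, del P, der P)) ((\<lambda>(Q, el, er). constr Q el er) x) = x"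
  proof
    fix x assume "x \<in> DD n p l"
    then obtain Q el er where x: "x = (Q, el, er)" and h: "DCP Q" "di Q \<ge> 2" "0 < el \<longrightarrow> nose_left Q" "0 < er \<longrightarrow> nose_right Q"
      by (auto simp: DD_def)
    have cs: "cst Q el er" by (rule cst_of[OF h])
    show "(\<lambda>P. (dQ P, del P, der P)) ((\<lambda>(Q, el, er). constr Q el er) x) = x"
      using dec_constr[OF h(1,2) cs] x by simp
  qed
  show "\<forall>y\<in>SS 2 n p l. (\<lambda>(Q, el, er). constr Q el er) ((\<lambda>P. (dQ P, del P, der P)) y) = y"
  proof
    fix P assume "P \<in> SS 2 n p l"
    then have "dcmp P" using n3 by (unfold_locales) (auto simp: SS_def)
    then show "(\<lambda>(Q, el, er). constr Q el er) ((\<lambda>P. (dQ P, del P, der P)) P) = P"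
      using dcmp.P_constr by fastforce
  qed
  show "(\<lambda>(Q, el, er). constr Q el er) ` DD n p l \<subseteq> SS 2 n p l"
  proof
    fix R assume "R \<in> (\<lambda>(Q, el, er). constr Q el er) ` DD n p l"
    then obtain Q el er where P: "R = constr Q el er" and x: "(Q, el, er) \<in> DD n p l" by auto
    then have h: "DCP Q" "di Q \<ge> 2" "0 < el \<longrightarrow> nose_left Q" "0 < er \<longrightarrow> nose_right Q" "N2 Q"
      "di Q + 1 = n" "pe Q + 4 + 4 * (el + er) = p" "la Q + el + er + 1 = l"
      by (auto simp: DD_def)
    interpret cst Q el er by (rule cst_of[OF h(1-4)])
    have "di Q \<le> nat m + 1" using N2_di_last[OF h(5) fin] .
    then have "1 \<le> m" using h(2) by linarith
    then have "N2 R" using N2P h(5) P by blast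
    then show "R \<in> SS 2 n p l" unfolding SS_def
      using DCP_P diP nosesP(3) peP laP h P by auto
  qed
  show "(\<lambda>P. (dQ P, del P, der P)) ` SS 2 n p l \<subseteq> DD n p l"
  proof
    fix x assume "x \<in> (\<lambda>P. (dQ P, del P, der P)) ` SS 2 n p l"
    then obtain P where x: "x = (dQ P, del P, der P)" and Ps: "P \<in> SS 2 n p l" by auto
    then have h: "DCP P" "N2 P" "di P = n" "noses P = 2" "pe P = p" "la P = l" by (auto simp: SS_def)
    interpret dcmp P using h n3 by unfold_locales auto
    interpret c: cst Q "del P" "der P" by (rule cstQ)
    have PE: "P = constr Q (del P) (der P)" by (rule P_constr)
    have dd: "di P = di Q + 1" using c.diP PE by simp
    have "di P \<le> nat M + 1" using N2_di_last[OF h(2) fin] .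
    then have "2 \<le> M" using h(3) n3 by linarith
    then have "(0,0) \<in> Q" using h(2) by (auto simp: N2_def dQ_def)
    then have "N2 Q" using h(2) QsubP by (auto simp: N2_def)
    moreover have "pe P = pe Q + 4 + 4 * (del P + der P)" using c.peP PE by simp
    moreover have "la P = la Q + del P + der P + 1" using c.laP PE by simp
    ultimately show "x \<in> DD n p l" unfolding DD_def x using dcpQ el_pos er_pos dd h n3 by auto
  qed
qed


lemma col_occupied:
  assumes ec: "edge_connected P" and z: "(0,0) \<in> P" and c: "c \<in> P"
    and x: "min 0 (fst c) \<le> x" "x \<le> max 0 (fst c)"
  shows "x \<in> fst ` P"
proof (cases "x = 0 \<or> x = fst c")
  case True then show ?thesis using z c by force
next
  case False
  show ?thesis
  proof (cases "0 < fst c")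
    case True
    then have "0 < x" "x < fst c" using x False by auto
    then obtain u v where uv: "u \<in> P \<inter> {d. fst d < x}" "v \<in> P - {d. fst d < x}" "adj u v"
      using conn_split[OF ec z, of "{d. fst d < x}" c] c by auto
    have "\<bar>fst u - fst v\<bar> \<le> 1" using adj_fst[OF uv(3)] .
    then have "fst v = x" using uv by auto
    then show ?thesis using uv by force
  next
    case False2: False
    then have "x < 0" "fst c < x" using x False by auto
    then obtain u v where uv: "u \<in> P \<inter> {d. fst d > x}" "v \<in> P - {d. fst d > x}" "adj u v"
      using conn_split[OF ec z, of "{d. fst d > x}" c] c by auto
    have "\<bar>fst u - fst v\<bar> \<le> 1" using adj_fst[OF uv(3)] .
    then have "fst v = x" using uv by auto
    then show ?thesis using uv by force
  qed
qed

lemma pe_bound_fst: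
  assumes dc: "DCP P" and z: "(0,0) \<in> P" and c: "c \<in> P"
  shows "\<bar>fst c\<bar> < int (pe P)"
proof -
  have fin: "finite P" and ec: "edge_connected P" using dc by (auto simp: DCP_iff)
  let ?I = "{min 0 (fst c)..max 0 (fst c)}"
  let ?top = "\<lambda>x. Max {y. (x, y) \<in> P}"
  let ?g = "\<lambda>x. ((x, ?top x), (x, ?top x + 1))"
  let ?E = "{(d, d'). d \<in> P \<and> d' \<notin> P \<and> adj d d'}"
  have finE: "finite ?E"
    by (rule finite_subset[of _ "Sigma P (\<lambda>d. {d'. adj d d'})"]) (auto simp: fin finite_nbrs)
  have sub: "?g ` ?I \<subseteq> ?E"
  proof
    fix e assume "e \<in> ?g ` ?I"
    then obtain x where x: "x \<in> ?I" "e = ?g x" by auto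
    have "x \<in> fst ` P" using col_occupied[OF ec z c] x by auto
    then obtain y where y: "(x, y) \<in> P" by force
    have fy: "finite {y. (x, y) \<in> P}"
      by (rule finite_subset[of _ "snd ` P"]) (use fin in force)+
    have "?top x \<in> {y. (x, y) \<in> P}" using y fy Max_in by blast
    moreover have "(x, ?top x + 1) \<notin> P"
    proof
      assume "(x, ?top x + 1) \<in> P"
      then have "?top x + 1 \<le> ?top x" by (intro Max_ge[OF fy]) simp
      then show False by simp
    qed
    ultimately show "e \<in> ?E" using x by (auto simp: adj_def)
  qed
  have "inj_on ?g ?I" by (auto simp: inj_on_def)
  then have "card ?I \<le> card ?E" using card_mono[OF finE sub] by (simp add: card_image)
  then show ?thesis unfolding pe_def by auto
qed

definition swp :: "cell \<Rightarrow> cell" where "swp c = (snd c, fst c)"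

lemma swp_swp[simp]: "swp (swp c) = c" by (simp add: swp_def)
lemma swp_adj[simp]: "adj (swp d) (swp d') \<longleftrightarrow> adj d d'" by (auto simp: swp_def adj_def)
lemma swp_mem: "x \<in> swp ` P \<longleftrightarrow> swp x \<in> P" by (metis image_iff swp_swp)
lemma swp_inj: "inj swp" by (metis injI swp_swp)

lemma pe_swp: "pe (swp ` P) = pe P"
proof -
  let ?h = "\<lambda>(d, d'). (swp d, swp d')"
  have "{(d, d'). d \<in> swp ` P \<and> d' \<notin> swp ` P \<and> adj d d'} =
       ?h ` {(d, d'). d \<in> P \<and> d' \<notin> P \<and> adj d d'}"
  proof (rule set_eqI)
    fix e :: "cell \<times> cell"
    obtain d d' where e: "e = (d, d')" by (cases e)
    have "e \<in> ?h ` {(d, d'). d \<in> P \<and> d' \<notin> P \<and> adj d d'} \<longleftrightarrow> (swp d, swp d') \<in> {(d, d'). d \<in> P \<and> d' \<notin> P \<and> adj d d'}"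
      unfolding e image_iff
    proof
      assume "\<exists>x\<in>{(d, d'). d \<in> P \<and> d' \<notin> P \<and> adj d d'}. (d, d') = ?h x"
      then obtain u u' where "(u, u') \<in> {(d, d'). d \<in> P \<and> d' \<notin> P \<and> adj d d'}" "d = swp u" "d' = swp u'" by auto
      then show "(swp d, swp d') \<in> {(d, d'). d \<in> P \<and> d' \<notin> P \<and> adj d d'}" by simp
    next
      assume "(swp d, swp d') \<in> {(d, d'). d \<in> P \<and> d' \<notin> P \<and> adj d d'}"
      then show "\<exists>x\<in>{(d, d'). d \<in> P \<and> d' \<notin> P \<and> adj d d'}. (d, d') = ?h x"
        by (intro bexI[of _ "(swp d, swp d')"]) simp_all
    qed
    then show "e \<in> {(d, d'). d \<in> swp ` P \<and> d' \<notin> swp ` P \<and> adj d d'} \<longleftrightarrow> e \<in> ?h ` {(d, d'). d \<in> P \<and> d' \<notin> P \<and> adj d d'}"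
      unfolding e by (simp add: swp_mem)
  qed
  moreover have "inj_on ?h X" for X
    by (auto simp: inj_on_def swp_def)
  ultimately show ?thesis unfolding pe_def by (simp add: card_image)
qed

lemma DCP_swp: "DCP P \<Longrightarrow> DCP (swp ` P)"
proof -
  assume dc: "DCP P"
  have fin: "finite P" and ne: "P \<noteq> {}" and ec: "edge_connected P" using dc by (auto simp: DCP_iff)
  have "edge_connected (swp ` P)"
    unfolding ec_def2
  proof (intro ballI)
    fix u v assume "u \<in> swp ` P" "v \<in> swp ` P"
    then obtain u0 v0 where u0: "u0 \<in> P" "u = swp u0" and v0: "v0 \<in> P" "v = swp v0" by auto
    have "(u0, v0) \<in> (arel P)\<^sup>*" using ec u0 v0 by (simp add: ec_def2)
    then have "(swp u0, swp v0) \<in> (arel (swp ` P))\<^sup>*"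
    proof (induction rule: rtrancl_induct)
      case base then show ?case by simp
    next
      case (step y z)
      then have "(swp y, swp z) \<in> arel (swp ` P)" by (auto simp: arel_def)
      then show ?case using step.IH by (meson rtrancl_into_rtrancl)
    qed
    then show "(u, v) \<in> (arel (swp ` P))\<^sup>*" using u0 v0 by simp
  qed
  moreover have "conv (swp ` P)" unfolding conv_def
  proof (intro allI impI)
    fix n a b c assume h: "(a, n - a) \<in> swp ` P" "(c, n - c) \<in> swp ` P" "a \<le> b" "b \<le> c"
    then have "(n - a, a) \<in> P" "(n - c, c) \<in> P" by (auto simp: swp_mem swp_def)
    then have h2: "(n - c, n - (n - c)) \<in> P" "(n - a, n - (n - a)) \<in> P" by simp_all
    have "n - c \<le> n - b" "n - b \<le> n - a" using h(3,4) by simp_all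
    then have "(n - b, n - (n - b)) \<in> P" using dc h2 unfolding DCP_def by blast
    then show "(b, n - b) \<in> swp ` P" by (subst swp_mem) (simp add: swp_def)
  qed
  ultimately show ?thesis using fin ne by (simp add: DCP_iff)
qed

lemma pe_bound_snd:
  assumes dc: "DCP P" and z: "(0,0) \<in> P" and c: "c \<in> P"
  shows "\<bar>snd c\<bar> < int (pe P)"
proof -
  have z': "(0,0) \<in> swp ` P" using z by (subst swp_mem) (simp add: swp_def)
  have c': "swp c \<in> swp ` P" using c by simp
  have "\<bar>fst (swp c)\<bar> < int (pe (swp ` P))" by (rule pe_bound_fst[OF DCP_swp[OF dc] z' c'])
  then show ?thesis unfolding pe_swp by (simp add: swp_def)
qed

lemma finite_pe_le: "finite {P. DCP P \<and> N2 P \<and> pe P \<le> p}"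
proof (rule finite_subset[of _ "Pow ({-int p..int p} \<times> {-int p..int p})"])
  show "{P. DCP P \<and> N2 P \<and> pe P \<le> p} \<subseteq> Pow ({-int p..int p} \<times> {-int p..int p})"
  proof
    fix P assume "P \<in> {P. DCP P \<and> N2 P \<and> pe P \<le> p}"
    then have h: "DCP P" "(0,0) \<in> P" "pe P \<le> p" by (auto simp: N2_def)
    show "P \<in> Pow ({-int p..int p} \<times> {-int p..int p})"
    proof (rule PowI, rule subsetI)
      fix c assume "c \<in> P"
      then have "\<bar>fst c\<bar> < int (pe P)" "\<bar>snd c\<bar> < int (pe P)"
        using pe_bound_fst[OF h(1,2)] pe_bound_snd[OF h(1,2)] by auto
      then show "c \<in> {-int p..int p} \<times> {-int p..int p}" using h(3) by (cases c) auto
    qed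
  qed
qed simp

lemma finite_SS: "finite (SS k n p l)"
  by (rule finite_subset[OF _ finite_pe_le[of p]]) (auto simp: SS_def)


lemma noses_cases:
  "noses Q = 2 \<longleftrightarrow> nose_left Q \<and> nose_right Q"
  "noses Q = 1 \<longleftrightarrow> (nose_left Q \<and> \<not> nose_right Q) \<or> (\<not> nose_left Q \<and> nose_right Q)"
  "noses Q = 0 \<longleftrightarrow> \<not> nose_left Q \<and> \<not> nose_right Q"
  "noses Q \<le> 2"
  by (auto simp: noses_def)

lemma card_pairs_sum: "card {e :: nat \<times> nat. fst e + snd e = i} = i + 1"
proof -
  have "{e :: nat \<times> nat. fst e + snd e = i} = (\<lambda>j. (j, i - j)) ` {0..i}"
    by (auto simp: image_iff)
  moreover have "inj_on (\<lambda>j. (j, i - j)) {0..i}" by (auto simp: inj_on_def)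
  ultimately show ?thesis by (simp add: card_image)
qed

lemma finite_DD: "finite (DD n p l)"
proof (rule finite_subset)
  show "DD n p l \<subseteq> {Q. DCP Q \<and> N2 Q \<and> pe Q \<le> p} \<times> ({..p} \<times> {..p})"
    by (auto simp: DD_def)
  show "finite ({Q. DCP Q \<and> N2 Q \<and> pe Q \<le> p} \<times> ({..p} \<times> {..p}))"
    using finite_pe_le by simp
qed

definition TT :: "nat \<Rightarrow> nat \<Rightarrow> nat \<Rightarrow> nat \<Rightarrow> (cell set \<times> nat \<times> nat) set" where
  "TT n p l i = {x \<in> DD n p l. fst (snd x) + snd (snd x) = i}"

lemma card_TT:
  assumes n3: "n \<ge> 3" and il: "i < l"
  shows "card (TT n p l i) = (if 4 + 4 * i \<le> p then
     (i + 1) * card (SS 2 (n-1) (p - 4 - 4*i) (l - 1 - i)) + card (SS 1 (n-1) (p - 4 - 4*i) (l - 1 - i))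
     + (if i = 0 then card (SS 0 (n-1) (p - 4 - 4*i) (l - 1 - i)) else 0) else 0)"
proof (cases "4 + 4 * i \<le> p")
  case False
  then have "TT n p l i = {}" by (auto simp: TT_def DD_def)
  then show ?thesis using False by simp
next
  case True
  let ?p = "p - 4 - 4*i" and ?l = "l - 1 - i"
  have memT: "(Q, el, er) \<in> TT n p l i \<longleftrightarrow> DCP Q \<and> N2 Q \<and> di Q \<ge> 2 \<and> di Q = n - 1 \<and> el + er = i \<and>
      (0 < el \<longrightarrow> nose_left Q) \<and> (0 < er \<longrightarrow> nose_right Q) \<and> pe Q = ?p \<and> la Q = ?l" for Q el er
    using True il n3 by (auto simp: TT_def DD_def)
  let ?A2 = "{x \<in> TT n p l i. noses (fst x) = 2}"
  let ?A1 = "{x \<in> TT n p l i. noses (fst x) = 1}"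
  let ?A0 = "{x \<in> TT n p l i. noses (fst x) = 0}"
  have fT: "finite (TT n p l i)" using finite_DD by (rule finite_subset[rotated]) (auto simp: TT_def)
  have n012: "noses Q = 0 \<or> noses Q = 1 \<or> noses Q = 2" for Q by (simp add: noses_def)
  have split: "TT n p l i = ?A2 \<union> (?A1 \<union> ?A0)"
    using n012 by blast
  have u1: "card (?A2 \<union> (?A1 \<union> ?A0)) = card ?A2 + card (?A1 \<union> ?A0)"
    by (rule card_Un_disjoint) (use fT in auto)
  have u2: "card (?A1 \<union> ?A0) = card ?A1 + card ?A0"
    by (rule card_Un_disjoint) (use fT in auto)
  have cT: "card (TT n p l i) = card ?A2 + (card ?A1 + card ?A0)"
    using arg_cong[where f=card, OF split] u1 u2 by simp
  have A2: "?A2 = (\<lambda>(Q, e). (Q, fst e, snd e)) ` (SS 2 (n-1) ?p ?l \<times> {e. fst e + snd e = i})"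
  proof (rule set_eqI)
    fix x :: "cell set \<times> nat \<times> nat"
    obtain Q el er where x: "x = (Q, el, er)" by (cases x)
    show "x \<in> ?A2 \<longleftrightarrow> x \<in> (\<lambda>(Q, e). (Q, fst e, snd e)) ` (SS 2 (n-1) ?p ?l \<times> {e. fst e + snd e = i})"
      unfolding x using memT[of Q el er] n3 by (auto simp: SS_def noses_cases image_iff)
  qed
  have cA2: "card ?A2 = (i + 1) * card (SS 2 (n-1) ?p ?l)"
  proof -
    have "inj_on (\<lambda>(Q, e). (Q, fst e, snd e)) X" for X :: "(cell set \<times> nat \<times> nat) set"
      by (auto simp: inj_on_def)
    then show ?thesis unfolding A2 by (simp add: card_image card_cartesian_product card_pairs_sum)
  qed
  let ?g = "\<lambda>Q. (Q, if nose_left Q then i else 0, if nose_left Q then 0 else i)"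
  have A1: "?A1 = ?g ` SS 1 (n-1) ?p ?l"
  proof (rule set_eqI)
    fix x :: "cell set \<times> nat \<times> nat"
    obtain Q el er where x: "x = (Q, el, er)" by (cases x)
    show "x \<in> ?A1 \<longleftrightarrow> x \<in> ?g ` SS 1 (n-1) ?p ?l"
    proof
      assume "x \<in> ?A1"
      then have h: "DCP Q" "N2 Q" "di Q \<ge> 2" "di Q = n - 1" "el + er = i" "0 < el \<longrightarrow> nose_left Q"
        "0 < er \<longrightarrow> nose_right Q" "pe Q = ?p" "la Q = ?l" "noses Q = 1"
        using memT[of Q el er] x by auto
      then have "Q \<in> SS 1 (n-1) ?p ?l" by (simp add: SS_def)
      moreover have "x = ?g Q" using h unfolding x noses_cases by auto
      ultimately show "x \<in> ?g ` SS 1 (n-1) ?p ?l" by blast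
    next
      assume "x \<in> ?g ` SS 1 (n-1) ?p ?l"
      then obtain R where R: "R \<in> SS 1 (n-1) ?p ?l" "x = ?g R" by blast
      then have "Q = R" using x by simp
      then show "x \<in> ?A1" using R memT[of Q el er] x by (auto simp: SS_def noses_def split: if_splits)
    qed
  qed
  have cA1: "card ?A1 = card (SS 1 (n-1) ?p ?l)"
    unfolding A1 by (rule card_image) (auto simp: inj_on_def)
  have cA0: "card ?A0 = (if i = 0 then card (SS 0 (n-1) ?p ?l) else 0)"
  proof (cases "i = 0")
    case True
    have "?A0 = (\<lambda>Q. (Q, 0, 0)) ` SS 0 (n-1) ?p ?l"
    proof (rule set_eqI)
      fix x :: "cell set \<times> nat \<times> nat"
      obtain Q el er where x: "x = (Q, el, er)" by (cases x)
      show "x \<in> ?A0 \<longleftrightarrow> x \<in> (\<lambda>Q. (Q, 0, 0)) ` SS 0 (n-1) ?p ?l"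
        unfolding x using memT[of Q el er] True by (auto simp: SS_def noses_cases image_iff)
    qed
    moreover have "card ((\<lambda>Q. (Q, 0::nat, 0::nat)) ` SS 0 (n-1) ?p ?l) = card (SS 0 (n-1) ?p ?l)"
      by (rule card_image) (auto simp: inj_on_def)
    ultimately show ?thesis using True by simp
  next
    case False
    have "?A0 = {}"
    proof (rule equals0I)
      fix x assume "x \<in> ?A0"
      then obtain Q el er where x: "x = (Q, el, er)" "x \<in> ?A0" by (cases x) auto
      then show False using memT[of Q el er] False by (auto simp: noses_cases)
    qed
    then have "card ?A0 = 0" by (metis card.empty)
    then show ?thesis using False by simp
  qed
  show ?thesis using True cT cA2 cA1 cA0 by simp
qed


lemma card_SS2_ge3:
  assumes n3: "n \<ge> 3"
  shows "card (SS 2 n p l) = (\<Sum>i<l. if 4 + 4 * i \<le> p then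
     (i + 1) * card (SS 2 (n-1) (p - 4 - 4*i) (l - 1 - i)) + card (SS 1 (n-1) (p - 4 - 4*i) (l - 1 - i)) else 0)
     + (if 4 \<le> p \<and> 1 \<le> l then card (SS 0 (n-1) (p - 4) (l - 1)) else 0)"
proof -
  have "card (SS 2 n p l) = card (DD n p l)" using bij_betw_same_card[OF bij_DD[OF n3]] by simp
  also have "DD n p l = (\<Union>i\<in>{..<l}. TT n p l i)"
    by (auto simp: TT_def DD_def)
  also have "card (\<Union>i\<in>{..<l}. TT n p l i) = (\<Sum>i<l. card (TT n p l i))"
    by (rule card_UN_disjoint) (auto simp: TT_def intro: finite_subset[OF _ finite_DD])
  also have "\<dots> = (\<Sum>i<l. (if 4 + 4 * i \<le> p then
     (i + 1) * card (SS 2 (n-1) (p - 4 - 4*i) (l - 1 - i)) + card (SS 1 (n-1) (p - 4 - 4*i) (l - 1 - i)) else 0)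
     + (if 4 + 4 * i \<le> p \<and> i = 0 then card (SS 0 (n-1) (p - 4 - 4*i) (l - 1 - i)) else 0))"
    by (rule sum.cong) (auto simp: card_TT[OF n3])
  also have "\<dots> = (\<Sum>i<l. if 4 + 4 * i \<le> p then
     (i + 1) * card (SS 2 (n-1) (p - 4 - 4*i) (l - 1 - i)) + card (SS 1 (n-1) (p - 4 - 4*i) (l - 1 - i)) else 0)
     + (\<Sum>i<l. if 4 + 4 * i \<le> p \<and> i = 0 then card (SS 0 (n-1) (p - 4 - 4*i) (l - 1 - i)) else 0)"
    by (rule sum.distrib)
  also have "(\<Sum>i<l. if 4 + 4 * i \<le> p \<and> i = 0 then card (SS 0 (n-1) (p - 4 - 4*i) (l - 1 - i)) else 0)
      = (if 4 \<le> p \<and> 1 \<le> l then card (SS 0 (n-1) (p - 4) (l - 1)) else 0)"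
  proof -
    have "(\<Sum>i<l. if 4 + 4 * i \<le> p \<and> i = 0 then card (SS 0 (n-1) (p - 4 - 4*i) (l - 1 - i)) else 0)
       = (\<Sum>i<l. if i = 0 then (if 4 \<le> p then card (SS 0 (n-1) (p - 4) (l - 1)) else 0) else 0)"
      by (rule sum.cong) auto
    also have "\<dots> = (if 0 \<in> {..<l} then (if 4 \<le> p then card (SS 0 (n-1) (p - 4) (l - 1)) else 0) else 0)"
      by (rule sum.delta) simp
    finally show ?thesis by auto
  qed
  finally show ?thesis .
qed

lemma SS_small: "n < 2 \<Longrightarrow> SS k n p l = {}"
  by (auto simp: SS_def)

lemma two_noses_shape:
  assumes dcp: "DCP P" and d2: "di P \<ge> 2" and two: "noses P = 2"
  shows "Dg P (lastdiag_index P - 1) = {nose_ia P..nose_ib P}"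
    "Dg P (lastdiag_index P) = {nose_ia P..nose_ib P + 1}" "nose_ia P \<le> nose_ib P"
proof -
  let ?M = "lastdiag_index P"
  have fin: "finite P" and ne: "P \<noteq> {}" and cv: "conv P" using dcp by (auto simp: DCP_iff)
  have lnbr: "i \<in> Dg P ?M \<Longrightarrow> i \<in> Dg P (?M - 1) \<or> i - 1 \<in> Dg P (?M - 1)" for i
    using last_nbr[OF dcp d2] by blast
  have D1_ne: "Dg P (?M - 1) \<noteq> {}"
  proof -
    obtain i where "i \<in> Dg P ?M" using Dg_last_ne[OF fin ne] by blast
    then show ?thesis using lnbr by blast
  qed
  show D1: "Dg P (?M - 1) = {nose_ia P..nose_ib P}"
    unfolding nose_ia_Dg nose_ib_Dg using Dg_interval[OF cv fin D1_ne] .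
  show "nose_ia P \<le> nose_ib P" using D1 D1_ne by auto
  have nl: "nose_left P" and nr: "nose_right P" using two by (auto simp: noses_def split: if_splits)
  have a: "nose_ia P \<in> Dg P ?M" using nl by (simp add: nose_left_Dg)
  have b: "nose_ib P + 1 \<in> Dg P ?M" using nr by (simp add: nose_right_Dg)
  show "Dg P ?M = {nose_ia P..nose_ib P + 1}"
  proof (rule set_eqI)
    fix i show "i \<in> Dg P ?M \<longleftrightarrow> i \<in> {nose_ia P..nose_ib P + 1}"
    proof
      assume "i \<in> Dg P ?M"
      then have "i \<in> Dg P (?M - 1) \<or> i - 1 \<in> Dg P (?M - 1)" by (rule lnbr)
      then show "i \<in> {nose_ia P..nose_ib P + 1}" unfolding D1 by auto
    next
      assume "i \<in> {nose_ia P..nose_ib P + 1}" then show "i \<in> Dg P ?M" using conv_Dg[OF cv a b] by auto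
    qed
  qed
qed

definition Wd :: "nat \<Rightarrow> cell set" where "Wd w = cd 0 ` {0..int w - 1}"

lemma Wd_facts:
  assumes w: "w \<ge> 1"
  shows "finite (Wd w)" "Wd w \<noteq> {}" "conv (Wd w)" "lastdiag_index (Wd w) = 0"
    "Dg (Wd w) 0 = {0..int w - 1}" "c1 (Wd w) = 0" "c2 (Wd w) = int w - 1"
    "di (Wd w) = 1" "pe (Wd w) = 4 * w" "la (Wd w) = w" "N2 (Wd w)"
proof -
  have mem: "cd k i \<in> Wd w \<longleftrightarrow> k = 0 \<and> i \<in> {0..int w - 1}" for k i unfolding Wd_def cd_img ..
  have Dg: "Dg (Wd w) k = (if k = 0 then {0..int w - 1} else {})" for k
    using mem by (auto simp: mem_cd_Dg[symmetric])
  show f: "finite (Wd w)" by (simp add: Wd_def)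
  show ne: "Wd w \<noteq> {}" using w by (simp add: Wd_def)
  show "conv (Wd w)" unfolding conv_iff_Dg Dg by auto
  have dg0: "c \<in> Wd w \<Longrightarrow> fst c + snd c = 0" for c by (auto simp: Wd_def)
  show L: "lastdiag_index (Wd w) = 0"
    by (rule lastdiag_eqI[OF f]) (use Dg w in \<open>auto simp: diags_iff dg0\<close>)
  show "Dg (Wd w) 0 = {0..int w - 1}" using Dg by simp
  show "c1 (Wd w) = 0" unfolding c1_def L using Dg w by (simp add: Min_Icc)
  show "c2 (Wd w) = int w - 1" unfolding c2_def L using Dg w by (simp add: Max_Icc)
  have "diags (Wd w) = {0}" using Dg w by (auto simp: diags_iff)
  then show "di (Wd w) = 1" by (simp add: di_def)
  have "pe (Wd w) + card (arel (Wd w)) = 4 * card (Wd w)" by (rule pe_formula[OF f])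
  moreover have "card (Wd w) = w" unfolding Wd_def card_cd_img by simp
  ultimately show "pe (Wd w) = 4 * w" by (simp add: Wd_def arel_diag)
  show "la (Wd w) = w" unfolding la_Dg L using Dg by simp
  show "N2 (Wd w)" unfolding N2_def using w by (auto simp: Wd_def cd_def image_iff)
qed

lemma cst_Wd: "w \<ge> 1 \<Longrightarrow> cst (Wd w) 0 0"
proof -
  assume w: "w \<ge> 1"
  note F = Wd_facts[OF w]
  show ?thesis
  proof
    show "finite (Wd w)" "Wd w \<noteq> {}" "conv (Wd w)" using F by auto
    fix q assume q: "q \<in> Wd w"
    then obtain i where i: "q = cd 0 i" "i \<in> {0..int w - 1}" by (auto simp: Wd_def)
    show "\<exists>i\<in>Dg (Wd w) (lastdiag_index (Wd w)). (q, cd (lastdiag_index (Wd w)) i) \<in> (arel (Wd w))\<^sup>*"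
      using F i by auto
    fix i assume "i \<in> {c1 (Wd w) - int 0..c2 (Wd w) + int 0}" "i \<notin> Dg (Wd w) (lastdiag_index (Wd w))"
    then show "\<not> adj q (cd (lastdiag_index (Wd w)) i)" using F by simp
  qed
qed

lemma card_SS2_2: "card (SS 2 2 p l) = (if p = 4 * l \<and> l \<ge> 2 then 1 else 0)"
proof -
  have PW: "constr (Wd w) 0 0 \<in> SS 2 2 (4 * w + 4) (w + 1)" if w: "w \<ge> 1" for w
  proof -
    interpret cst "Wd w" 0 0 by (rule cst_Wd[OF w])
    note F = Wd_facts[OF w]
    show ?thesis unfolding SS_def
      using DCP_P diP nosesP(3) peP laP N2P F by auto
  qed
  have shape: "P = constr (Wd (l - 1)) 0 0 \<and> l \<ge> 2" if P: "P \<in> SS 2 2 p l" for P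
  proof -
    have h: "DCP P" "N2 P" "di P = 2" "noses P = 2" "la P = l" using P by (auto simp: SS_def)
    have fin: "finite P" and ne: "P \<noteq> {}" using h by (auto simp: DCP_iff)
    let ?M = "lastdiag_index P"
    have sh: "Dg P (?M - 1) = {nose_ia P..nose_ib P}" "Dg P ?M = {nose_ia P..nose_ib P + 1}"
      using two_noses_shape[OF h(1)] h by auto
    have dsub: "diags P \<subseteq> {0..?M}"
    proof
      fix k assume "k \<in> diags P"
      then obtain c where "c \<in> P" "fst c + snd c = k" by (auto simp: diags_def)
      then show "k \<in> {0..?M}" using h(2) dg_le_last[OF fin] by (auto simp: N2_def)
    qed
    have z: "(0,0) \<in> P" using h(2) by (simp add: N2_def)
    have ia_le: "nose_ia P \<le> nose_ib P" using two_noses_shape(3)[OF h(1)] h by auto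
    have in3: "0 \<in> diags P" "?M - 1 \<in> diags P" "?M \<in> diags P"
      using z dg_in_diags[of "(0,0)" P] sh ia_le by (auto simp: diags_iff)
    have M1: "?M = 1"
    proof (rule ccontr)
      assume "?M \<noteq> 1"
      then have "?M \<ge> 2 \<or> ?M \<le> 0" by auto
      then show False
      proof
        assume "?M \<ge> 2"
        then have "{0, ?M - 1, ?M} \<subseteq> diags P" "card {0, ?M - 1, ?M} = 3" using in3 by auto
        then have "3 \<le> card (diags P)" using diags_finite[OF fin] by (metis card_mono)
        then show False using h(3) by (simp add: di_def)
      next
        assume "?M \<le> 0"
        then have "diags P \<subseteq> {0}" using dsub by auto
        then have "card (diags P) \<le> 1" using card_mono[of "{0}" "diags P"] by simp
        then show False using h(3) by (simp add: di_def)
      qed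
    qed
    have D0: "Dg P 0 = {nose_ia P..nose_ib P}" and D1: "Dg P 1 = {nose_ia P..nose_ib P + 1}"
      using sh M1 by simp_all
    have "0 \<in> Dg P 0" using z by (simp add: Dg_def)
    moreover have "\<forall>i\<in>Dg P 0. 0 \<le> i" using h(2) by (auto simp: N2_def Dg_def)
    ultimately have ia0: "nose_ia P = 0"
    proof -
      assume a1: "0 \<in> Dg P 0" "\<forall>i\<in>Dg P 0. 0 \<le> i"
      have "nose_ia P \<le> 0" using a1(1) unfolding D0 by simp
      moreover have "nose_ia P \<in> Dg P 0" unfolding D0 using ia_le by simp
      ultimately show ?thesis using a1(2) by force
    qed
    have la: "la P = nat (nose_ib P + 2)" unfolding la_Dg M1 D1 ia0 by simp
    define w where "w = l - 1"
    have lw: "l = w + 1" "w \<ge> 1" "int w - 1 = nose_ib P" using la h(5) ia_le ia0 unfolding w_def by auto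
    interpret cst "Wd w" 0 0 by (rule cst_Wd[OF lw(2)])
    note F = Wd_facts[OF lw(2)]
    have "P = constr (Wd w) 0 0"
    proof (rule set_eqI)
      fix c
      obtain k i where c: "c = cd k i" using cell_cd[of c] by blast
      have "c \<in> constr (Wd w) 0 0 \<longleftrightarrow> (k = 0 \<and> i \<in> {0..int w - 1}) \<or> (k = 1 \<and> i \<in> {0..int w})"
      proof -
        have m1: "cd k i \<in> Wd w \<longleftrightarrow> k = 0 \<and> i \<in> {0..int w - 1}" unfolding Wd_def cd_img ..
        show ?thesis unfolding c memP m1 F(4,6,7) by auto
      qed
      moreover have "c \<in> P \<longleftrightarrow> (k = 0 \<and> i \<in> {0..int w - 1}) \<or> (k = 1 \<and> i \<in> {0..int w})"
      proof -
        have cP: "c \<in> P \<longleftrightarrow> i \<in> Dg P k" using c by (simp add: mem_cd_Dg)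
        have kk: "k = 0 \<or> k = 1" if "i \<in> Dg P k"
        proof -
          have "k \<in> diags P" using that by (auto simp: diags_iff)
          then show ?thesis using dsub M1 by auto
        qed
        have E0: "Dg P 0 = {0..int w - 1}" using D0 ia0 lw(3) by simp
        have E1: "Dg P 1 = {0..int w}" using D1 ia0 lw(3) by simp
        show ?thesis
        proof (cases "k = 0")
          case True then show ?thesis using cP E0 by simp
        next
          case F0: False
          show ?thesis
          proof (cases "k = 1")
            case True then show ?thesis using cP E1 by simp
          next
            case False then show ?thesis using cP kk F0 by auto
          qed
        qed
      qed
      ultimately show "c \<in> P \<longleftrightarrow> c \<in> constr (Wd w) 0 0" by simp
    qed
    then show ?thesis using lw unfolding w_def by simp
  qed
  show ?thesis
  proof (cases "p = 4 * l \<and> l \<ge> 2")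
    case True
    have "SS 2 2 p l = {constr (Wd (l - 1)) 0 0}"
    proof
      show "SS 2 2 p l \<subseteq> {constr (Wd (l - 1)) 0 0}" using shape by blast
      have "1 \<le> l - 1" using True by (simp add: le_diff_conv2)
      then have "constr (Wd (l - 1)) 0 0 \<in> SS 2 2 (4 * (l - 1) + 4) (l - 1 + 1)" by (rule PW)
      moreover have "4 * (l - 1) + 4 = p" "l - 1 + 1 = l" using True by auto
      ultimately show "{constr (Wd (l - 1)) 0 0} \<subseteq> SS 2 2 p l" by simp
    qed
    then show ?thesis using True by simp
  next
    case False
    have "SS 2 2 p l = {}"
    proof (rule equals0I)
      fix P assume P: "P \<in> SS 2 2 p l"
      then have "P = constr (Wd (l - 1)) 0 0" "l \<ge> 2" using shape by auto
      moreover have "constr (Wd (l - 1)) 0 0 \<in> SS 2 2 (4 * (l - 1) + 4) (l - 1 + 1)"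
        by (rule PW) (use \<open>l \<ge> 2\<close> in simp)
      ultimately have "pe P = 4 * (l - 1) + 4" by (simp add: SS_def)
      moreover have "pe P = p" using P by (simp add: SS_def)
      ultimately show False using False \<open>l \<ge> 2\<close> by auto
    qed
    then show ?thesis using False by simp
  qed
qed


definition shift :: "int \<Rightarrow> int \<Rightarrow> cell \<Rightarrow> cell" where "shift u v c = (fst c + u, snd c + v)"
definition trs :: "int \<Rightarrow> int \<Rightarrow> cell set \<Rightarrow> cell set" where "trs u v P = shift u v ` P"

lemma shift_shift[simp]: "shift u v (shift u' v' c) = shift (u + u') (v + v') c"
  by (simp add: shift_def algebra_simps)
lemma shift_0[simp]: "shift 0 0 c = c" by (simp add: shift_def)
lemma shift_inv[simp]: "shift (-u) (-v) (shift u v c) = c" "shift u v (shift (-u) (-v) c) = c"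
  by (simp_all add: shift_def)
lemma trs_trs: "trs u v (trs u' v' P) = trs (u + u') (v + v') P"
  by (simp add: trs_def image_image)
lemma trs_0: "trs 0 0 P = P" by (simp add: trs_def)
lemma mem_trs: "c \<in> trs u v P \<longleftrightarrow> shift (-u) (-v) c \<in> P"
proof
  assume "c \<in> trs u v P"
  then obtain d where "d \<in> P" "c = shift u v d" by (auto simp: trs_def)
  then show "shift (-u) (-v) c \<in> P" by simp
next
  assume "shift (-u) (-v) c \<in> P"
  then have "shift u v (shift (-u) (-v) c) \<in> trs u v P" unfolding trs_def by blast
  then show "c \<in> trs u v P" by simp
qed
lemma adj_shift[simp]: "adj (shift u v c) (shift u v c') \<longleftrightarrow> adj c c'"
  by (simp add: shift_def adj_def)
lemma shift_cd: "shift (-u) (-v) (cd k i) = cd (k - u - v) (i - u)"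
  by (simp add: shift_def cd_def algebra_simps)
lemma inj_shift: "inj_on (shift u v) X" by (auto simp: inj_on_def shift_def)

lemma Dg_trs: "Dg (trs u v P) k = (\<lambda>i. i + u) ` Dg P (k - u - v)"
proof (rule set_eqI)
  fix i
  have "i \<in> Dg (trs u v P) k \<longleftrightarrow> i - u \<in> Dg P (k - u - v)"
    unfolding mem_cd_Dg[symmetric] mem_trs shift_cd ..
  also have "\<dots> \<longleftrightarrow> i \<in> (\<lambda>i. i + u) ` Dg P (k - u - v)" by (auto simp: image_iff intro!: bexI[of _ "i - u"])
  finally show "i \<in> Dg (trs u v P) k \<longleftrightarrow> i \<in> (\<lambda>i. i + u) ` Dg P (k - u - v)" .
qed

lemma diags_trs: "diags (trs u v P) = (\<lambda>k. k + u + v) ` diags P"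
proof (rule set_eqI)
  fix k
  have "k \<in> diags (trs u v P) \<longleftrightarrow> k - u - v \<in> diags P" by (simp add: diags_iff Dg_trs)
  also have "\<dots> \<longleftrightarrow> k \<in> (\<lambda>k. k + u + v) ` diags P" by (auto simp: image_iff intro!: bexI[of _ "k - u - v"])
  finally show "k \<in> diags (trs u v P) \<longleftrightarrow> k \<in> (\<lambda>k. k + u + v) ` diags P" .
qed

lemma di_trs: "di (trs u v P) = di P"
  unfolding di_def diags_trs by (rule card_image) (auto simp: inj_on_def)

lemma finite_trs: "finite (trs u v P) \<longleftrightarrow> finite P"
  unfolding trs_def using finite_image_iff[OF inj_shift] .

lemma ne_trs: "trs u v P \<noteq> {} \<longleftrightarrow> P \<noteq> {}" by (simp add: trs_def)

lemma last_trs: "finite P \<Longrightarrow> P \<noteq> {} \<Longrightarrow> lastdiag_index (trs u v P) = lastdiag_index P + u + v"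
proof -
  assume f: "finite P" and ne: "P \<noteq> {}"
  show ?thesis
  proof (rule lastdiag_eqI)
    show "finite (trs u v P)" using f finite_trs by blast
    show "lastdiag_index P + u + v \<in> diags (trs u v P)" unfolding diags_trs using last_in_diags[OF f ne] by blast
    fix c assume "c \<in> trs u v P"
    then obtain d where "d \<in> P" "c = shift u v d" by (auto simp: trs_def)
    then show "fst c + snd c \<le> lastdiag_index P + u + v" using dg_le_last[OF f] by (auto simp: shift_def)
  qed
qed

lemma la_trs: "finite P \<Longrightarrow> P \<noteq> {} \<Longrightarrow> la (trs u v P) = la P"
  unfolding la_Dg by (simp add: last_trs Dg_trs card_image inj_on_def)

lemma pe_trs: "pe (trs u v P) = pe P"
proof -
  let ?h = "\<lambda>(d, d'). (shift u v d, shift u v d')"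
  have "{(d, d'). d \<in> trs u v P \<and> d' \<notin> trs u v P \<and> adj d d'} = ?h ` {(d, d'). d \<in> P \<and> d' \<notin> P \<and> adj d d'}"
  proof (rule set_eqI)
    fix e :: "cell \<times> cell"
    obtain d d' where e: "e = (d, d')" by (cases e)
    have "e \<in> ?h ` {(d, d'). d \<in> P \<and> d' \<notin> P \<and> adj d d'} \<longleftrightarrow> (shift (-u) (-v) d, shift (-u) (-v) d') \<in> {(d, d'). d \<in> P \<and> d' \<notin> P \<and> adj d d'}"
      unfolding e image_iff
    proof
      assume "\<exists>x\<in>{(d, d'). d \<in> P \<and> d' \<notin> P \<and> adj d d'}. (d, d') = ?h x"
      then obtain w w' where "(w, w') \<in> {(d, d'). d \<in> P \<and> d' \<notin> P \<and> adj d d'}" "d = shift u v w" "d' = shift u v w'" by auto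
      then show "(shift (-u) (-v) d, shift (-u) (-v) d') \<in> {(d, d'). d \<in> P \<and> d' \<notin> P \<and> adj d d'}" by simp
    next
      assume "(shift (-u) (-v) d, shift (-u) (-v) d') \<in> {(d, d'). d \<in> P \<and> d' \<notin> P \<and> adj d d'}"
      then show "\<exists>x\<in>{(d, d'). d \<in> P \<and> d' \<notin> P \<and> adj d d'}. (d, d') = ?h x"
        by (intro bexI[of _ "(shift (-u) (-v) d, shift (-u) (-v) d')"]) simp_all
    qed
    then show "e \<in> {(d, d'). d \<in> trs u v P \<and> d' \<notin> trs u v P \<and> adj d d'} \<longleftrightarrow> e \<in> ?h ` {(d, d'). d \<in> P \<and> d' \<notin> P \<and> adj d d'}"
      unfolding e by (simp add: mem_trs)
  qed
  moreover have "inj_on ?h X" for X by (auto simp: inj_on_def shift_def)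
  ultimately show ?thesis unfolding pe_def by (simp add: card_image)
qed

lemma conv_trs: "conv P \<Longrightarrow> conv (trs u v P)"
  unfolding conv_iff_Dg Dg_trs
proof (intro allI impI)
  fix k x y z
  assume c: "\<forall>k x y z. x \<in> Dg P k \<longrightarrow> z \<in> Dg P k \<longrightarrow> x \<le> y \<longrightarrow> y \<le> z \<longrightarrow> y \<in> Dg P k"
    and h: "x \<in> (\<lambda>i. i + u) ` Dg P (k - u - v)" "z \<in> (\<lambda>i. i + u) ` Dg P (k - u - v)" "x \<le> y" "y \<le> z"
  obtain x0 where x0: "x0 \<in> Dg P (k - u - v)" "x = x0 + u" using h(1) by blast
  obtain z0 where z0: "z0 \<in> Dg P (k - u - v)" "z = z0 + u" using h(2) by blast
  have "x0 \<le> y - u" "y - u \<le> z0" using h(3,4) x0 z0 by simp_all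
  then have "y - u \<in> Dg P (k - u - v)" using c x0(1) z0(1) by blast
  then have "(y - u) + u \<in> (\<lambda>i. i + u) ` Dg P (k - u - v)" by (rule imageI)
  then show "y \<in> (\<lambda>i. i + u) ` Dg P (k - u - v)" by simp
qed

lemma ec_trs: "edge_connected P \<Longrightarrow> edge_connected (trs u v P)"
  unfolding ec_def2
proof (intro ballI)
  fix a b assume ec: "\<forall>a\<in>P. \<forall>b\<in>P. (a, b) \<in> (arel P)\<^sup>*" and ab: "a \<in> trs u v P" "b \<in> trs u v P"
  then obtain a0 b0 where a0: "a0 \<in> P" "a = shift u v a0" and b0: "b0 \<in> P" "b = shift u v b0" by (auto simp: trs_def)
  have "(a0, b0) \<in> (arel P)\<^sup>*" using ec a0 b0 by blast
  then have "(shift u v a0, shift u v b0) \<in> (arel (trs u v P))\<^sup>*"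
  proof (induction rule: rtrancl_induct)
    case base then show ?case by simp
  next
    case (step y z)
    then have "(shift u v y, shift u v z) \<in> arel (trs u v P)" by (auto simp: arel_def trs_def)
    then show ?case using step.IH by (meson rtrancl_into_rtrancl)
  qed
  then show "(a, b) \<in> (arel (trs u v P))\<^sup>*" using a0 b0 by simp
qed

lemma DCP_trs: "DCP P \<Longrightarrow> DCP (trs u v P)"
  unfolding DCP_iff finite_trs ne_trs using conv_trs ec_trs by blast

lemma Min_shift: "finite S \<Longrightarrow> S \<noteq> {} \<Longrightarrow> Min ((\<lambda>i. i + u) ` S) = Min S + (u::int)"
  using Min_add_commute[of S "\<lambda>x. x" u] by simp
lemma Max_shift: "finite S \<Longrightarrow> S \<noteq> {} \<Longrightarrow> Max ((\<lambda>i. i + u) ` S) = Max S + (u::int)"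
  using Max_add_commute[of S "\<lambda>x. x" u] by simp

lemma noses_trs:
  assumes dc: "DCP P" and d2: "di P \<ge> 2"
  shows "noses (trs u v P) = noses P"
proof -
  have f: "finite P" and ne: "P \<noteq> {}" using dc by (auto simp: DCP_iff)
  let ?M = "lastdiag_index P"
  have L: "lastdiag_index (trs u v P) = ?M + u + v" by (rule last_trs[OF f ne])
  have D1ne: "Dg P (?M - 1) \<noteq> {}"
  proof -
    obtain i where "i \<in> Dg P ?M" using Dg_last_ne[OF f ne] by blast
    then show ?thesis using last_nbr[OF dc d2] by blast
  qed
  have fD: "finite (Dg P (?M - 1))" using finite_Dg[OF f] .
  have e1: "?M + u + v - 1 - u - v = ?M - 1" "?M + u + v - u - v = ?M" by simp_all
  have ia: "nose_ia (trs u v P) = nose_ia P + u"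
    unfolding nose_ia_Dg L Dg_trs e1 using Min_shift[OF fD D1ne] .
  have ib: "nose_ib (trs u v P) = nose_ib P + u"
    unfolding nose_ib_Dg L Dg_trs e1 using Max_shift[OF fD D1ne] .
  have "nose_left (trs u v P) \<longleftrightarrow> nose_left P"
    unfolding nose_left_Dg ia L Dg_trs e1 by auto
  moreover have "nose_right (trs u v P) \<longleftrightarrow> nose_right P"
    unfolding nose_right_Dg ib L Dg_trs e1 by (auto simp: image_iff)
  ultimately show ?thesis by (simp add: noses_def)
qed


definition am :: "cell set \<Rightarrow> int" where "am P = Min (diags P)"
definition a0 :: "cell set \<Rightarrow> int" where "a0 P = Min (Dg P (am P))"

lemma am_trs:
  assumes f: "finite P" and ne: "P \<noteq> {}"
  shows "am (trs u v P) = am P + u + v" "a0 (trs u v P) = a0 P + u"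
proof -
  have fd: "finite (diags P)" "diags P \<noteq> {}" using diags_finite[OF f] diags_ne[OF ne] by auto
  have e: "(\<lambda>k. k + u + v) = (\<lambda>k. k + (u + v))" by (auto simp: algebra_simps)
  show A: "am (trs u v P) = am P + u + v" unfolding am_def diags_trs e using Min_shift[OF fd] by simp
  have "am P \<in> diags P" unfolding am_def using fd by simp
  then have ne2: "Dg P (am P) \<noteq> {}" by (simp add: diags_iff)
  show "a0 (trs u v P) = a0 P + u" unfolding a0_def A Dg_trs
    using Min_shift[OF finite_Dg[OF f] ne2] by simp
qed

lemma N2_iff_anchor:
  assumes f: "finite P" and ne: "P \<noteq> {}"
  shows "N2 P \<longleftrightarrow> am P = 0 \<and> a0 P = 0"
proof -
  have fd: "finite (diags P)" "diags P \<noteq> {}" using diags_finite[OF f] diags_ne[OF ne] by auto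
  show ?thesis
  proof
    assume n: "N2 P"
    have z: "(0,0) \<in> P" using n by (simp add: N2_def)
    have "0 \<in> diags P" using dg_in_diags[OF z] by simp
    moreover have "\<forall>k\<in>diags P. 0 \<le> k" using n by (auto simp: N2_def diags_def)
    ultimately have A: "am P = 0" unfolding am_def using fd by (intro Min_eqI) auto
    have "0 \<in> Dg P 0" using z by (simp add: Dg_def)
    moreover have "\<forall>i\<in>Dg P 0. 0 \<le> i" using n by (auto simp: N2_def Dg_def)
    ultimately have "a0 P = 0" unfolding a0_def A using finite_Dg[OF f] by (intro Min_eqI) auto
    then show "am P = 0 \<and> a0 P = 0" using A by simp
  next
    assume h: "am P = 0 \<and> a0 P = 0"
    have m0: "0 \<in> diags P" "\<forall>k\<in>diags P. 0 \<le> k" using h fd unfolding am_def by (metis Min_in, metis Min_le)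
    have D0: "Dg P 0 \<noteq> {}" using m0(1) by (simp add: diags_iff)
    have "0 \<in> Dg P 0" "\<forall>i\<in>Dg P 0. 0 \<le> i" using h D0 finite_Dg[OF f] unfolding a0_def
      by (metis Min_in, metis Min_le)
    then have z: "(0,0) \<in> P" and pos: "\<forall>i\<in>Dg P 0. 0 \<le> i" by (auto simp: Dg_def)
    show "N2 P" unfolding N2_def
    proof (intro conjI ballI)
      show "(0,0) \<in> P" by (rule z)
      fix c assume c: "c \<in> P"
      show "0 \<le> fst c + snd c" using m0(2) dg_in_diags[OF c] by blast
      show "fst c + snd c = 0 \<longrightarrow> 0 \<le> fst c"
      proof
        assume d: "fst c + snd c = 0"
        have "cd (fst c + snd c) (fst c) \<in> P" using c cell_cd[of c] by simp
        then have "fst c \<in> Dg P 0" using d by (simp add: mem_cd_Dg)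
        then show "0 \<le> fst c" using pos by blast
      qed
    qed
  qed
qed

lemma fst_trs: "fst ` trs u v P = (\<lambda>x. x + u) ` fst ` P" by (simp add: trs_def shift_def image_image)
lemma snd_trs: "snd ` trs u v P = (\<lambda>x. x + v) ` snd ` P" by (simp add: trs_def shift_def image_image)

lemma norm_iff:
  assumes f: "finite P" and ne: "P \<noteq> {}"
  shows "normalized P \<longleftrightarrow> Min (fst ` P) = 0 \<and> Min (snd ` P) = 0"
proof -
  have ff: "finite (fst ` P)" "fst ` P \<noteq> {}" "finite (snd ` P)" "snd ` P \<noteq> {}" using f ne by auto
  show ?thesis
  proof
    assume n: "normalized P"
    have "Min (fst ` P) = 0"
      using n ff unfolding normalized_def by (intro Min_eqI) (auto simp: image_iff, force)
    moreover have "Min (snd ` P) = 0"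
      using n ff unfolding normalized_def by (intro Min_eqI) (auto simp: image_iff, force)
    ultimately show "Min (fst ` P) = 0 \<and> Min (snd ` P) = 0" by simp
  next
    assume h: "Min (fst ` P) = 0 \<and> Min (snd ` P) = 0"
    have "0 \<in> fst ` P" "0 \<in> snd ` P" using h ff by (metis Min_in)+
    moreover have "\<forall>c\<in>P. 0 \<le> fst c \<and> 0 \<le> snd c" using h ff by (metis Min_le image_eqI)
    ultimately show "normalized P" unfolding normalized_def by (auto simp: image_iff)
  qed
qed

lemma count_eq: "dcp_count k n p l = card (SS k n p l)"
proof -
  let ?X = "\<lambda>P. di P \<ge> 2 \<and> noses P = k \<and> di P = n \<and> pe P = p \<and> la P = l"
  have X_trs: "?X (trs u v P) \<longleftrightarrow> ?X P" if "DCP P" for u v P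
  proof -
    have f: "finite P" "P \<noteq> {}" using that by (auto simp: DCP_iff)
    show ?thesis using noses_trs[OF that] di_trs pe_trs la_trs[OF f] by auto
  qed
  let ?f = "\<lambda>P. trs (- a0 P) (- (am P - a0 P)) P"
  let ?g = "\<lambda>P. trs (- Min (fst ` P)) (- Min (snd ` P)) P"
  have bij: "bij_betw ?f {P. DCP P \<and> normalized P \<and> ?X P} (SS k n p l)"
  proof (rule bij_betw_byWitness[where f' = ?g])
    show "\<forall>P\<in>{P. DCP P \<and> normalized P \<and> ?X P}. ?g (?f P) = P"
    proof
      fix P assume P: "P \<in> {P. DCP P \<and> normalized P \<and> ?X P}"
      then have f: "finite P" "P \<noteq> {}" and nm: "normalized P" by (auto simp: DCP_iff)
      have m: "Min (fst ` P) = 0" "Min (snd ` P) = 0" using nm norm_iff[OF f] by auto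
      have ff: "finite (fst ` P)" "fst ` P \<noteq> {}" "finite (snd ` P)" "snd ` P \<noteq> {}" using f by auto
      have "Min (fst ` ?f P) = Min (fst ` P) + - a0 P" unfolding fst_trs by (rule Min_shift[OF ff(1,2)])
      moreover have "Min (snd ` ?f P) = Min (snd ` P) + - (am P - a0 P)" unfolding snd_trs by (rule Min_shift[OF ff(3,4)])
      ultimately have "Min (fst ` ?f P) = - a0 P" "Min (snd ` ?f P) = - (am P - a0 P)" using m by simp_all
      then show "?g (?f P) = P" by (simp add: trs_trs trs_0)
    qed
    show "\<forall>P\<in>SS k n p l. ?f (?g P) = P"
    proof
      fix P assume P: "P \<in> SS k n p l"
      then have f: "finite P" "P \<noteq> {}" and n2: "N2 P" by (auto simp: SS_def DCP_iff)
      have an: "am P = 0" "a0 P = 0" using N2_iff_anchor[OF f] n2 by auto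
      have "am (?g P) = - Min (fst ` P) - Min (snd ` P)" "a0 (?g P) = - Min (fst ` P)"
        using am_trs[OF f] an by simp_all
      then show "?f (?g P) = P" by (simp add: trs_trs trs_0)
    qed
    show "?f ` {P. DCP P \<and> normalized P \<and> ?X P} \<subseteq> SS k n p l"
    proof
      fix R assume "R \<in> ?f ` {P. DCP P \<and> normalized P \<and> ?X P}"
      then obtain P where P: "DCP P" "?X P" and R: "R = ?f P" by auto
      have f: "finite P" "P \<noteq> {}" using P by (auto simp: DCP_iff)
      have "am R = 0" "a0 R = 0" unfolding R using am_trs[OF f] by simp_all
      moreover have "finite R" "R \<noteq> {}" unfolding R using f finite_trs ne_trs by auto
      ultimately have "N2 R" using N2_iff_anchor by blast
      then show "R \<in> SS k n p l" unfolding SS_def R using DCP_trs[OF P(1)] X_trs[OF P(1)] P(2) by simp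
    qed
    show "?g ` SS k n p l \<subseteq> {P. DCP P \<and> normalized P \<and> ?X P}"
    proof
      fix R assume "R \<in> ?g ` SS k n p l"
      then obtain P where P: "DCP P" "?X P" and R: "R = ?g P" by (auto simp: SS_def)
      have f: "finite P" "P \<noteq> {}" using P by (auto simp: DCP_iff)
      have ff: "finite (fst ` P)" "fst ` P \<noteq> {}" "finite (snd ` P)" "snd ` P \<noteq> {}" using f by auto
      have "Min (fst ` R) = Min (fst ` P) + - Min (fst ` P)" unfolding R fst_trs by (rule Min_shift[OF ff(1,2)])
      moreover have "Min (snd ` R) = Min (snd ` P) + - Min (snd ` P)" unfolding R snd_trs by (rule Min_shift[OF ff(3,4)])
      ultimately have "Min (fst ` R) = 0" "Min (snd ` R) = 0" by simp_all
      moreover have "finite R" "R \<noteq> {}" unfolding R using f finite_trs ne_trs by auto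
      ultimately have "normalized R" using norm_iff by blast
      then show "R \<in> {P. DCP P \<and> normalized P \<and> ?X P}" unfolding R using DCP_trs[OF P(1)] X_trs[OF P(1)] P(2) by simp
    qed
  qed
  have "dcp_count k n p l = card {P. DCP P \<and> normalized P \<and> ?X P}" unfolding dcp_count_def by (rule arg_cong[where f=card]) auto
  also have "\<dots> = card (SS k n p l)" by (rule bij_betw_same_card[OF bij])
  finally show ?thesis .
qed


unbundle fps_syntax

type_synonym T3 = "rat fps fps fps"

definition co :: "T3 \<Rightarrow> nat \<Rightarrow> nat \<Rightarrow> nat \<Rightarrow> rat" where "co F l p n = F $ l $ p $ n"

lemma co_add: "co (F + G) l p n = co F l p n + co G l p n" by (simp add: co_def)

lemma co_D: "co (fps_const (fps_const (fps_X ^ k)) * F) l p n = (if n < k then 0 else co F l p (n - k))"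
  by (simp add: co_def fps_X_power_mult_nth)

lemma co_X: "co (fps_const (fps_X ^ k) * F) l p n = (if p < k then 0 else co F l (p - k) n)"
  by (simp add: co_def fps_X_power_mult_nth)

lemma co_Z: "co (fps_X ^ k * F) l p n = (if l < k then 0 else co F (l - k) p n)"
  by (simp add: co_def fps_X_power_mult_nth)

lemma co_one: "co 1 l p n = (if l = 0 \<and> p = 0 \<and> n = 0 then 1 else 0)"
  by (simp add: co_def)

lemma co_geo: "co (Abs_fps (\<lambda>i. of_nat (c i) * fps_X ^ (4 * i)) * F) l p n =
   (\<Sum>i=0..l. of_nat (c i) * (if p < 4 * i then 0 else co F (l - i) (p - 4 * i) n))"
proof -
  have "co (Abs_fps (\<lambda>i. of_nat (c i) * fps_X ^ (4 * i)) * F) l p n =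
     (\<Sum>i=0..l. ((of_nat (c i) * fps_X ^ (4 * i)) * F $ (l - i)) $ p $ n)"
    by (simp add: co_def fps_mult_nth fps_sum_nth)
  also have "\<dots> = (\<Sum>i=0..l. of_nat (c i) * (if p < 4 * i then 0 else co F (l - i) (p - 4 * i) n))"
  proof (rule sum.cong[OF refl])
    fix i
    have "((of_nat (c i) * fps_X ^ (4 * i)) * F $ (l - i)) $ p $ n
        = (fps_const (of_nat (c i)) * (fps_X ^ (4 * i) * F $ (l - i))) $ p $ n"
      by (simp add: fps_of_nat mult.assoc)
    also have "\<dots> = of_nat (c i) * (if p < 4 * i then 0 else co F (l - i) (p - 4 * i) n)"
      by (simp add: co_def fps_X_power_mult_nth fps_of_nat)
    finally show "((of_nat (c i) * fps_X ^ (4 * i)) * F $ (l - i)) $ p $ n = of_nat (c i) * (if p < 4 * i then 0 else co F (l - i) (p - 4 * i) n)" .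
  qed
  finally show ?thesis .
qed


unbundle fps_syntax

lemma dc_small: "n < 2 \<Longrightarrow> dcp_count k n p l = 0"
  by (simp add: count_eq SS_small)

lemma comb: "dcp_count 2 n p l = (if n = 2 \<and> p = 4 * l \<and> 2 \<le> l then 1 else 0)
   + (\<Sum>i<l. if 4 + 4 * i \<le> p then (i + 1) * dcp_count 2 (n-1) (p - 4 - 4*i) (l - 1 - i)
                   + dcp_count 1 (n-1) (p - 4 - 4*i) (l - 1 - i) else 0)
   + (if 4 \<le> p \<and> 1 \<le> l then dcp_count 0 (n-1) (p - 4) (l - 1) else 0)"
proof (cases "n \<ge> 3")
  case True
  then show ?thesis unfolding count_eq using card_SS2_ge3[OF True, of p l] by simp
next
  case False
  then have "n - 1 < 2" by simp
  then have z: "dcp_count k (n - 1) p' l' = 0" for k p' l' by (rule dc_small)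
  show ?thesis
  proof (cases "n = 2")
    case True then show ?thesis using card_SS2_2 z unfolding count_eq by simp
  next
    case False
    then have "n < 2" using \<open>\<not> n \<ge> 3\<close> by simp
    then show ?thesis using z dc_small[of n] False by simp
  qed
qed

lemma inv_right: "(f :: T3) $ 0 = 1 \<Longrightarrow> f * inverse f = 1"
proof -
  assume f0: "f $ 0 = 1"
  have i1: "inverse (1 :: rat fps fps) = 1" by (rule fps_inverse_one'[OF fps_inverse_one])
  have "inverse f = fps_right_inverse f (inverse (f $ 0))" by (simp add: fps_inverse_def)
  then have "inverse f = fps_right_inverse f 1" using f0 i1 by simp
  moreover have "f * fps_right_inverse f 1 = 1" by (rule fps_right_inverse) (simp add: f0)
  ultimately show ?thesis by simp
qed

lemma inv_unique: "(f :: T3) * g = 1 \<Longrightarrow> f $ 0 = 1 \<Longrightarrow> inverse f = g"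
proof -
  assume fg: "f * g = 1" and f0: "f $ 0 = 1"
  have "inverse f = inverse f * (f * g)" using fg by simp
  also have "\<dots> = (f * inverse f) * g" by (simp add: algebra_simps)
  also have "\<dots> = g" using inv_right[OF f0] by simp
  finally show ?thesis .
qed

definition GG :: T3 where "GG = Abs_fps (\<lambda>i. of_nat 1 * fps_X ^ (4 * i))"
definition GG2 :: T3 where "GG2 = Abs_fps (\<lambda>i. of_nat (i + 1) * fps_X ^ (4 * i))"

lemma u_eq: "Xv ^ 4 * Zv = fps_const (fps_X ^ 4) * fps_X"
  by (simp add: Xv_def Zv_def fps_const_power)

lemma uG: "(1 - fps_const (fps_X ^ 4) * fps_X) * GG = 1"
proof (rule fps_ext)
  fix n
  have "(1 - fps_const (fps_X ^ 4) * fps_X) * GG = GG - fps_const (fps_X ^ 4) * (fps_X * GG)"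
    by (simp add: algebra_simps)
  then have "((1 - fps_const (fps_X ^ 4) * fps_X) * GG) $ n = GG $ n - fps_X ^ 4 * (fps_X * GG) $ n"
    by simp
  also have "\<dots> = 1 $ n"
  proof (cases n)
    case 0 then show ?thesis by (simp add: GG_def)
  next
    case (Suc m)
    have "fps_X ^ (4 * Suc m) = (fps_X ^ 4 :: rat fps fps) * fps_X ^ (4 * m)"
      by (simp add: power_add[symmetric])
    then show ?thesis using Suc by (simp add: GG_def)
  qed
  finally show "((1 - fps_const (fps_X ^ 4) * fps_X) * GG) $ n = 1 $ n" .
qed

lemma GG_sq: "GG * GG = GG2"
proof (rule fps_ext)
  fix n
  have "(GG * GG) $ n = (\<Sum>i=0..n. (fps_X ^ (4 * n) :: rat fps fps))"
  proof -
    have "(GG * GG) $ n = (\<Sum>i=0..n. fps_X ^ (4 * i) * fps_X ^ (4 * (n - i)) :: rat fps fps)"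
      by (simp add: GG_def fps_mult_nth)
    also have "\<dots> = (\<Sum>i=0..n. (fps_X ^ (4 * n) :: rat fps fps))"
      by (rule sum.cong[OF refl]) (simp add: power_add[symmetric] algebra_simps)
    finally show ?thesis .
  qed
  also have "\<dots> = GG2 $ n" by (simp add: GG2_def)
  finally show "(GG * GG) $ n = GG2 $ n" .
qed

lemma invG: "inverse (1 - Xv ^ 4 * Zv) = GG"
  unfolding u_eq by (rule inv_unique[OF uG]) simp

lemma invG2: "inverse ((1 - Xv ^ 4 * Zv) ^ 2) = GG2"
proof (rule inv_unique)
  have "(1 - Xv ^ 4 * Zv) ^ 2 * GG2 = ((1 - fps_const (fps_X ^ 4) * fps_X) * GG) ^ 2"
    unfolding u_eq GG_sq[symmetric] by (simp add: power2_eq_square algebra_simps)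
  then show "(1 - Xv ^ 4 * Zv) ^ 2 * GG2 = 1" using uG by simp
  show "((1 - Xv ^ 4 * Zv) ^ 2) $ 0 = 1" by (simp add: u_eq power2_eq_square)
qed


unbundle fps_syntax

lemma co_ext: "(\<And>l p n. co F l p n = co G l p n) \<Longrightarrow> F = G"
  by (simp add: co_def fps_eq_iff)

lemma co_GF: "co (GF k) l p n = of_nat (dcp_count k n p l)"
  by (simp add: co_def GF_def)

lemmas co_GG = co_geo[of "\<lambda>i. 1", folded GG_def]
lemmas co_GG2 = co_geo[of "\<lambda>i. i + 1", folded GG2_def]

lemma e1: "Dv ^ 2 * Xv ^ 8 * Zv ^ 2 * GG = fps_const (fps_const (fps_X ^ 2)) * (fps_const (fps_X ^ 8) * (fps_X ^ 2 * (GG * 1)))"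
  by (simp add: Dv_def Xv_def Zv_def fps_const_power mult.assoc)

lemma e2: "Dv * Xv ^ 4 * Zv * F * G = fps_const (fps_const (fps_X ^ 1)) * (fps_const (fps_X ^ 4) * (fps_X ^ 1 * (F * G)))"
  by (simp add: Dv_def Xv_def Zv_def fps_const_power mult.assoc)

lemma e4: "Dv * Xv ^ 4 * Zv * G = fps_const (fps_const (fps_X ^ 1)) * (fps_const (fps_X ^ 4) * (fps_X ^ 1 * G))"
  by (simp add: Dv_def Xv_def Zv_def fps_const_power mult.assoc)

lemma R1: "co (fps_const (fps_const (fps_X ^ 2)) * (fps_const (fps_X ^ 8) * (fps_X ^ 2 * (GG * 1)))) l p n
   = (if n = 2 \<and> p = 4 * l \<and> 2 \<le> l then 1 else 0)"
proof -
  have "co (fps_const (fps_const (fps_X ^ 2)) * (fps_const (fps_X ^ 8) * (fps_X ^ 2 * (GG * 1)))) l p n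
     = (if n < 2 then 0 else if p < 8 then 0 else if l < 2 then 0 else
        (\<Sum>i=0..l-2. of_nat 1 * (if p - 8 < 4 * i then 0 else co 1 (l - 2 - i) (p - 8 - 4 * i) (n - 2))))"
    by (simp only: co_D co_X co_Z co_GG)
  also have "\<dots> = (if n = 2 \<and> p = 4 * l \<and> 2 \<le> l then 1 else 0)"
  proof (cases "n < 2 \<or> p < 8 \<or> l < 2")
    case True then show ?thesis by auto
  next
    case False
    then have h: "2 \<le> n" "8 \<le> p" "2 \<le> l" by auto
    have "(\<Sum>i=0..l-2. of_nat 1 * (if p - 8 < 4 * i then 0 else co 1 (l - 2 - i) (p - 8 - 4 * i) (n - 2)) :: rat)
        = (\<Sum>i=0..l-2. if i = l - 2 then (if n = 2 \<and> p = 4 * l then 1 else 0) else 0)"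
    proof (rule sum.cong[OF refl])
      fix i assume i: "i \<in> {0..l-2}"
      show "(of_nat 1 * (if p - 8 < 4 * i then 0 else co 1 (l - 2 - i) (p - 8 - 4 * i) (n - 2)) :: rat)
          = (if i = l - 2 then (if n = 2 \<and> p = 4 * l then 1 else 0) else 0)"
        using i h by (auto simp: co_one)
    qed
    also have "\<dots> = (if n = 2 \<and> p = 4 * l then 1 else 0)" by (subst sum.delta) auto
    finally show ?thesis using h by auto
  qed
  finally show ?thesis .
qed

lemma R2: "co (fps_const (fps_const (fps_X ^ 1)) * (fps_const (fps_X ^ 4) * (fps_X ^ 1 * (GG2 * GF k)))) l p n
   = (if n < 1 \<or> p < 4 \<or> l < 1 then 0 else
      (\<Sum>i=0..l-1. of_nat (i + 1) * (if p - 4 < 4 * i then 0 else of_nat (dcp_count k (n - 1) (p - 4 - 4 * i) (l - 1 - i)))))"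
  by (simp only: co_D co_X co_Z co_GG2 co_GF) (simp add: algebra_simps)

lemma R3: "co (fps_const (fps_const (fps_X ^ 1)) * (fps_const (fps_X ^ 4) * (fps_X ^ 1 * (GG * GF k)))) l p n
   = (if n < 1 \<or> p < 4 \<or> l < 1 then 0 else
      (\<Sum>i=0..l-1. (if p - 4 < 4 * i then 0 else of_nat (dcp_count k (n - 1) (p - 4 - 4 * i) (l - 1 - i)))))"
  by (simp only: co_D co_X co_Z co_GG co_GF) (simp add: algebra_simps)

lemma R4: "co (fps_const (fps_const (fps_X ^ 1)) * (fps_const (fps_X ^ 4) * (fps_X ^ 1 * GF k))) l p n
   = (if n < 1 \<or> p < 4 \<or> l < 1 then 0 else of_nat (dcp_count k (n - 1) (p - 4) (l - 1)))"
  by (simp only: co_D co_X co_Z co_GF) (simp add: algebra_simps)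


unbundle fps_syntax

lemma final_arith:
  "(of_nat (dcp_count 2 n p l) :: rat) = (if n = 2 \<and> p = 4 * l \<and> 2 \<le> l then 1 else 0)
   + (if n < 1 \<or> p < 4 \<or> l < 1 then 0 else
      (\<Sum>i=0..l-1. of_nat (i + 1) * (if p - 4 < 4 * i then 0 else of_nat (dcp_count 2 (n - 1) (p - 4 - 4 * i) (l - 1 - i)))))
   + (if n < 1 \<or> p < 4 \<or> l < 1 then 0 else
      (\<Sum>i=0..l-1. (if p - 4 < 4 * i then 0 else of_nat (dcp_count 1 (n - 1) (p - 4 - 4 * i) (l - 1 - i)))))
   + (if n < 1 \<or> p < 4 \<or> l < 1 then 0 else of_nat (dcp_count 0 (n - 1) (p - 4) (l - 1)))"
  (is "?L = ?T1 + ?R2 + ?R3 + ?R4")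
proof (cases "n = 0")
  case True then show ?thesis by (simp add: dc_small)
next
  case n1: False
  let ?S = "\<Sum>i<l. if 4 + 4 * i \<le> p then (i + 1) * dcp_count 2 (n-1) (p - 4 - 4*i) (l - 1 - i)
                   + dcp_count 1 (n-1) (p - 4 - 4*i) (l - 1 - i) else 0"
  let ?C = "if 4 \<le> p \<and> 1 \<le> l then dcp_count 0 (n-1) (p - 4) (l - 1) else 0"
  have c: "?L = ?T1 + of_nat ?S + of_nat ?C"
    by (subst comb) (simp only: of_nat_add, simp)
  have C: "(of_nat ?C :: rat) = ?R4" using n1 by auto
  have S: "(of_nat ?S :: rat) = ?R2 + ?R3"
  proof (cases "p < 4 \<or> l < 1")
    case True
    then have "?S = 0" by (auto intro!: sum.neutral)
    then show ?thesis using True by simp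
  next
    case False
    then have h: "4 \<le> p" "1 \<le> l" by auto
    have lt: "{..<l} = {0..l-1}" using h by auto
    have "(of_nat ?S :: rat) = (\<Sum>i=0..l-1. of_nat (if 4 + 4 * i \<le> p then (i + 1) * dcp_count 2 (n-1) (p - 4 - 4*i) (l - 1 - i)
                   + dcp_count 1 (n-1) (p - 4 - 4*i) (l - 1 - i) else 0))"
      unfolding lt of_nat_sum ..
    also have "\<dots> = (\<Sum>i=0..l-1. of_nat (i + 1) * (if p - 4 < 4 * i then 0 else of_nat (dcp_count 2 (n - 1) (p - 4 - 4 * i) (l - 1 - i)))
        + (if p - 4 < 4 * i then 0 else of_nat (dcp_count 1 (n - 1) (p - 4 - 4 * i) (l - 1 - i))))"
      by (rule sum.cong[OF refl]) (use h in \<open>auto simp: algebra_simps\<close>)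
    also have "\<dots> = ?R2 + ?R3" using h n1 by (simp add: sum.distrib)
    finally show ?thesis .
  qed
  show ?thesis using c C S by simp
qed

theorem mainTheorem4:
  shows "Agf = Dv ^ 2 * Xv ^ 8 * Zv ^ 2 * inverse (1 - Xv ^ 4 * Zv)
             + Dv * Xv ^ 4 * Zv * inverse ((1 - Xv ^ 4 * Zv) ^ 2) * Agf
             + Dv * Xv ^ 4 * Zv * inverse (1 - Xv ^ 4 * Zv) * Bgf
             + Dv * Xv ^ 4 * Zv * Cgf"
proof -
  have eq: "Dv ^ 2 * Xv ^ 8 * Zv ^ 2 * inverse (1 - Xv ^ 4 * Zv)
             + Dv * Xv ^ 4 * Zv * inverse ((1 - Xv ^ 4 * Zv) ^ 2) * Agf
             + Dv * Xv ^ 4 * Zv * inverse (1 - Xv ^ 4 * Zv) * Bgf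
             + Dv * Xv ^ 4 * Zv * Cgf =
      fps_const (fps_const (fps_X ^ 2)) * (fps_const (fps_X ^ 8) * (fps_X ^ 2 * (GG * 1)))
      + fps_const (fps_const (fps_X ^ 1)) * (fps_const (fps_X ^ 4) * (fps_X ^ 1 * (GG2 * GF 2)))
      + fps_const (fps_const (fps_X ^ 1)) * (fps_const (fps_X ^ 4) * (fps_X ^ 1 * (GG * GF 1)))
      + fps_const (fps_const (fps_X ^ 1)) * (fps_const (fps_X ^ 4) * (fps_X ^ 1 * GF 0))"
    unfolding invG invG2 e1 e2 unfolding e4 Agf_def Bgf_def Cgf_def ..
  show ?thesis unfolding eq
  proof (rule co_ext)
    fix l p n
    show "co Agf l p n = co (fps_const (fps_const (fps_X ^ 2)) * (fps_const (fps_X ^ 8) * (fps_X ^ 2 * (GG * 1)))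
      + fps_const (fps_const (fps_X ^ 1)) * (fps_const (fps_X ^ 4) * (fps_X ^ 1 * (GG2 * GF 2)))
      + fps_const (fps_const (fps_X ^ 1)) * (fps_const (fps_X ^ 4) * (fps_X ^ 1 * (GG * GF 1)))
      + fps_const (fps_const (fps_X ^ 1)) * (fps_const (fps_X ^ 4) * (fps_X ^ 1 * GF 0))) l p n"
      unfolding co_add R1 R2 R3 R4 Agf_def co_GF by (rule final_arith)
  qed
qed


end
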